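(* Assume $r_n\to\infty$, that condition $[A_1]$ holds, that $G$ is differentiable on $F^{-1}(U)$ with $g=G'$, and that for every $C>0$ $$\text{(i)}\quad \Psi_{p_n,\frac gf}(C)=O\Big(\Big(\frac{\log r_n}{r_n}\Big)^{1/4}\frac{|g|}{f}(\xi_{p_n})\Big),\qquad n\to\infty.$$ Let $$R_n(p_n)=G(\xi_{p_n n:n})-G(\xi_{p_n})+[F_n(\xi_{p_n})-F(\xi_{p_n})]\frac gf(\xi_{p_n}).$$ Then for each $c>0$ there is a constant $A>0$ not depending on $n$ such that $\mathbf P(|R_n(p_n)|>\Delta_n)=O(r_n^{-c})$, where $$\Delta_n=A(p_n(1-p_n))^{1/4}\Big(\frac{\log r_n}{n}\Big)^{3/4}\frac{|g|}{f}(\xi_{p_n}).$$ If moreover $[A_2]$ holds and, for every $C>0$, $$\text{(ii)}\quad \widehat\Psi_{p_n,\frac gf}(C)=O\Big(\Big(\frac{\log n}{r_n}\Big)^{1/4}\frac{|g|}{f}(\xi_{p_n})\Big),$$ then for each $c>0$ there is such an $A$ with $\mathbf P(|R_n(p_n)|>\widehat\Delta_n)=O(n^{-c})$, where $$\widehat\Delta_n=A(p_n(1-p_n))^{1/4}\Big(\frac{\log n}{n}\Big)^{3/4}\frac{|g|}{f}(\xi_{p_n}).$$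
   Context: Let $X_1,X_2,\dots$ be i.i.d. real random variables with distribution function $F$, and let $F^{-1}(u)=\inf\{x:F(x)\ge u\}$. Let $F_n$ be the empirical distribution function and $F_n^{-1}$ its left-continuous inverse. Let $k_n$ be integers with $0\le k_n\le n$, and put $p_n=k_n/n$, $r_n=k_n\wedge(n-k_n)$, $\xi_{p_n}=F^{-1}(p_n)$, $\xi_{p_n n:n}=F_n^{-1}(p_n)$ (the $k_n$-th order statistic), $a_1=\liminf p_n$ and $a_2=\limsup p_n$. Condition $[A_1]$: there is an open $U\subset(0,1)$ on which $F^{-1}$ is differentiable, i.e. $f=F'$ exists and is positive on $F^{-1}(U)$. Moreover, for some $0<\varepsilon\le1$, $U$ contains: - $(0,\varepsilon)$ if $a_1=a_2=0$; - $(1-\varepsilon,1)$ if $a_1=a_2=1$; - $(0,a_2]$ if $0=a_1<a_2<1$; - $[a_1,1)$ if $0<a_1<a_2=1$; - $[a_1,a_2]$ if $0<a_1\le a_2<1$; - $(0,1)$ if $a_1=0$, $a_2=1$. Condition $[A_2]$: $r_n^{-1}\log n\to0$. For $h$ on $F^{-1}(U)$ and $C>0$: $$\Psi_{p_n,h}(C)=\sup_{|t|\le C}\big|h(F^{-1}(p_n+t\sqrt{r_n\log r_n/n^2}))-h(F^{-1}(p_n))\big|,$$ and $\widehat\Psi_{p_n,h}(C)$ is the same expression with $\log r_n$ replaced by $\log n$. $(g/f)(x)=g(x)/f(x)$ and $(|g|/f)(x)=|g(x)|/f(x)$. *)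

theory Defs
  imports "HOL-Probability.Probability" "HOL-Library.Landau_Symbols"
begin

definition quantile :: "(real \<Rightarrow> real) \<Rightarrow> real \<Rightarrow> real" where
  "quantile F u = Inf {x. u \<le> F x}"

text \<open>Empirical distribution function of the first n observations X 0, ..., X (n-1)
  (these play the role of X_1, ..., X_n).\<close>
definition emp_df :: "(nat \<Rightarrow> 'a \<Rightarrow> real) \<Rightarrow> nat \<Rightarrow> 'a \<Rightarrow> real \<Rightarrow> real" where
  "emp_df X n \<omega> x = real (card {i \<in> {..<n}. X i \<omega> \<le> x}) / real n"

text \<open>Modulus Psi_{p,h}(C) = sup_{|t| \<le> C} |h(F^{-1}(p + t s)) - h(F^{-1}(p))|,
  with step s; taken in the extended reals so that an unbounded sup is +\<infinity>.\<close>
definition Psi :: "(real \<Rightarrow> real) \<Rightarrow> (real \<Rightarrow> real) \<Rightarrow> real \<Rightarrow> real \<Rightarrow> real \<Rightarrow> ereal" where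
  "Psi F h p s C = (SUP t \<in> {-C..C}. ereal \<bar>h (quantile F (p + t * s)) - h (quantile F p)\<bar>)"

definition cond_A1 :: "(real \<Rightarrow> real) \<Rightarrow> (real \<Rightarrow> real) \<Rightarrow> real set \<Rightarrow> (nat \<Rightarrow> real) \<Rightarrow> bool" where
  "cond_A1 F f U p \<longleftrightarrow>
     open U \<and> U \<subseteq> {0<..<1} \<and>
     (\<forall>x \<in> quantile F ` U. (F has_real_derivative f x) (at x) \<and> f x > 0) \<and>
     (let a1 = liminf (\<lambda>n. ereal (p n)); a2 = limsup (\<lambda>n. ereal (p n)) in
      \<exists>\<epsilon>::real. 0 < \<epsilon> \<and> \<epsilon> \<le> 1 \<and>
        (a1 = 0 \<and> a2 = 0 \<longrightarrow> {0<..<\<epsilon>} \<subseteq> U) \<and>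
        (a1 = 1 \<and> a2 = 1 \<longrightarrow> {1-\<epsilon><..<1} \<subseteq> U) \<and>
        (a1 = 0 \<and> 0 < a2 \<and> a2 < 1 \<longrightarrow> {0<..real_of_ereal a2} \<subseteq> U) \<and>
        (0 < a1 \<and> a1 < a2 \<and> a2 = 1 \<longrightarrow> {real_of_ereal a1..<1} \<subseteq> U) \<and>
        (0 < a1 \<and> a1 \<le> a2 \<and> a2 < 1 \<longrightarrow> {real_of_ereal a1..real_of_ereal a2} \<subseteq> U) \<and>
        (a1 = 0 \<and> a2 = 1 \<longrightarrow> {0<..<1} \<subseteq> U))"

end

theory Submission
  imports Defs
begin


lemma exp_le_quad: fixes x :: real assumes "\<bar>x\<bar> \<le> 1" shows "exp x \<le> 1 + x + x\<^sup>2"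
proof (cases "x \<ge> 0")
  case True then show ?thesis using exp_bound[of x] assms by auto
next
  case False
  define y where "y = -x"
  have y: "0 \<le> y" "y \<le> 1" using False assms by (auto simp: y_def)
  have "1 \<le> (1+y)*(1-y+y\<^sup>2)" using y by (simp add: algebra_simps power2_eq_square power3_eq_cube)
  also have "\<dots> \<le> exp y * (1-y+y\<^sup>2)"
  proof (rule mult_right_mono)
    show "1 + y \<le> exp y" using exp_ge_add_one_self[of y] by simp
    have "y * y \<le> y" using y by (simp add: mult_left_le_one_le)
    then show "0 \<le> 1 - y + y\<^sup>2" using y by (simp add: power2_eq_square)
  qed
  finally have "exp (-y) * 1 \<le> exp (-y) * (exp y * (1-y+y\<^sup>2))" by simp
  also have "\<dots> = 1-y+y\<^sup>2" by (simp add: exp_minus field_simps)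
  finally show ?thesis by (simp add: y_def)
qed

context prob_space begin

lemma mgf_bound:
  fixes X :: "nat \<Rightarrow> 'a \<Rightarrow> real"
  assumes indep: "indep_vars (\<lambda>_. borel) X UNIV" and B: "B \<in> sets borel"
    and q: "\<And>i. prob {\<omega>\<in>space M. X i \<omega> \<in> B} = q" and lam: "\<bar>l\<bar> \<le> 1"
  shows "expectation (\<lambda>\<omega>. exp (l * (\<Sum>i<n. indicator B (X i \<omega>)))) \<le> exp (n*q*(l + l\<^sup>2))"
    and "integrable M (\<lambda>\<omega>. exp (l * (\<Sum>i<n. indicator B (X i \<omega>))))"
proof -
  have rv: "\<And>i. random_variable borel (X i)" using indep unfolding indep_vars_def by auto
  define Y where "Y i \<omega> = exp (l * indicator B (X i \<omega>))" for i \<omega>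
  have ind2: "indep_vars (\<lambda>_. borel) Y UNIV"
    unfolding Y_def by (rule indep_vars_compose2[OF indep]) (use B in measurable)
  have eq: "(\<lambda>\<omega>. exp (l * (\<Sum>i<n. indicator B (X i \<omega>)))) = (\<lambda>\<omega>. \<Prod>i\<in>{..<n}. Y i \<omega>)"
    by (rule ext) (simp only: Y_def sum_distrib_left exp_sum[OF finite_lessThan])
  have ind3: "indep_vars (\<lambda>_. borel) Y {..<n}" using ind2 indep_vars_subset by blast
  have Yeq: "\<And>i. Y i = (\<lambda>\<omega>. 1 + (exp l - 1) * indicator B (X i \<omega>))"
    by (auto simp: Y_def indicator_def fun_eq_iff)
  have intY: "integrable M (Y i)" for i
  proof (rule integrable_const_bound[where B="exp \<bar>l\<bar>"])
    show "AE x in M. norm (Y i x) \<le> exp \<bar>l\<bar>"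
      by (auto simp: Y_def indicator_def)
    show "Y i \<in> borel_measurable M" unfolding Y_def using rv[of i] B by measurable
  qed
  show "integrable M (\<lambda>\<omega>. exp (l * (\<Sum>i<n. indicator B (X i \<omega>))))"
    unfolding eq by (rule indep_vars_integrable[OF _ ind3]) (auto intro: intY)
  have EY: "expectation (Y i) = 1 + (exp l - 1) * q" for i
  proof -
    have "expectation (Y i) = expectation (\<lambda>\<omega>. 1 + (exp l - 1) * indicator {\<omega>\<in>space M. X i \<omega> \<in> B} \<omega>)"
      unfolding Yeq by (rule Bochner_Integration.integral_cong) (auto simp: indicator_def)
    also have "\<dots> = 1 + (exp l - 1) * q"
    proof -
      have A: "{\<omega>\<in>space M. X i \<omega> \<in> B} \<in> events" using B rv[of i] by measurable
      have iA: "integrable M (indicat_real {\<omega>\<in>space M. X i \<omega> \<in> B})"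
        using A by (intro integrable_real_indicator) (auto simp: emeasure_eq_measure)
      have "expectation (\<lambda>\<omega>. 1 + (exp l - 1) * indicator {\<omega>\<in>space M. X i \<omega> \<in> B} \<omega>)
         = expectation (\<lambda>_. 1) + expectation (\<lambda>\<omega>. (exp l - 1) * indicator {\<omega>\<in>space M. X i \<omega> \<in> B} \<omega>)"
        by (rule Bochner_Integration.integral_add) (use iA in auto)
      also have "\<dots> = 1 + (exp l - 1) * q"
        using A q[of i] by (simp add: prob_space Int_absorb2)
      finally show ?thesis .
    qed
    finally show ?thesis .
  qed
  have q01: "0 \<le> q" "q \<le> 1" using q[of 0] by auto
  have "expectation (\<lambda>\<omega>. exp (l * (\<Sum>i<n. indicator B (X i \<omega>)))) = (\<Prod>i\<in>{..<n}. expectation (Y i))"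
    unfolding eq by (rule indep_vars_lebesgue_integral[OF _ ind3]) (auto intro: intY)
  also have "\<dots> = (1 + (exp l - 1) * q) ^ n" by (simp add: EY)
  also have "\<dots> \<le> exp ((exp l - 1) * q) ^ n"
  proof (rule power_mono)
    show "0 \<le> 1 + (exp l - 1) * q"
    proof -
      have "(1 - exp l) * q \<le> 1 * 1" using q01 by (intro mult_mono) auto
      then show ?thesis by (simp add: algebra_simps)
    qed
  qed (rule exp_ge_add_one_self)
  also have "\<dots> = exp (n * ((exp l - 1) * q))" by (simp add: exp_of_nat_mult)
  also have "\<dots> \<le> exp (n*q*(l + l\<^sup>2))"
  proof -
    have "(exp l - 1) * (q * n) \<le> (l + l\<^sup>2) * (q * n)"
      using exp_le_quad[OF lam] q01 by (intro mult_right_mono) auto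
    then show ?thesis by (simp add: algebra_simps)
  qed
  finally show "expectation (\<lambda>\<omega>. exp (l * (\<Sum>i<n. indicator B (X i \<omega>)))) \<le> exp (n*q*(l + l\<^sup>2))" .
qed

end

lemma chernoff_alg:
  fixes a t :: real assumes a: "0 \<le> a" and t: "0 < t"
  shows "a * (t/(2*a+t))\<^sup>2 - (t/(2*a+t)) * t \<le> -(t\<^sup>2/(4*a+2*t))"
proof -
  define D where "D = 2*a+t"
  have D: "D > 0" using a t by (simp add: D_def)
  have "a * (t/D)\<^sup>2 - (t/D) * t = t\<^sup>2 * (a - D) / D\<^sup>2"
    using D by (simp add: field_simps power2_eq_square)
  also have "\<dots> \<le> t\<^sup>2 * (- D/2) / D\<^sup>2"
    using D a t by (intro divide_right_mono mult_left_mono) (auto simp: D_def)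
  also have "\<dots> = -(t\<^sup>2/(2*D))" using D by (simp add: field_simps power2_eq_square)
  finally show ?thesis by (simp add: D_def algebra_simps)
qed

context prob_space begin

lemma chernoff:
  fixes X :: "nat \<Rightarrow> 'a \<Rightarrow> real"
  assumes indep: "indep_vars (\<lambda>_. borel) X UNIV" and B: "B \<in> sets borel"
    and q: "\<And>i. prob {\<omega>\<in>space M. X i \<omega> \<in> B} = q" and t: "0 < t"
  shows "prob {\<omega>\<in>space M. n*q + t \<le> (\<Sum>i<n. indicator B (X i \<omega>))} \<le> exp (-(t\<^sup>2/(4*(n*q)+2*t)))"
    and "prob {\<omega>\<in>space M. (\<Sum>i<n. indicator B (X i \<omega>)) \<le> n*q - t} \<le> exp (-(t\<^sup>2/(4*(n*q)+2*t)))"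
proof -
  have rv: "\<And>i. random_variable borel (X i)" using indep unfolding indep_vars_def by auto
  define S where "S \<omega> = (\<Sum>i<n. indicator B (X i \<omega>) :: real)" for \<omega>
  have q0: "0 \<le> q" using q[of 0] by auto
  define a where "a = n*q"
  have a: "0 \<le> a" using q0 by (simp add: a_def)
  define l where "l = t/(2*a+t)"
  have l: "0 < l" "l \<le> 1" using a t by (auto simp: l_def)
  have key: "a * l\<^sup>2 - l * t \<le> -(t\<^sup>2/(4*a+2*t))" unfolding l_def by (rule chernoff_alg[OF a t])
  have gen: "prob {\<omega>\<in>space M. c \<le> m * S \<omega>} \<le> exp (n*q*(m + m\<^sup>2) - c)" if m: "\<bar>m\<bar> \<le> 1" for m c
  proof -
    have "prob {\<omega>\<in>space M. c \<le> m * S \<omega>} \<le> prob {\<omega>\<in>space M. exp c \<le> exp (m * S \<omega>)}"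
      by simp
    also have "\<dots> \<le> expectation (\<lambda>\<omega>. exp (m * S \<omega>)) / exp c"
      by (rule integral_Markov_inequality_measure[where A="space M"])
         (use mgf_bound(2)[OF indep B q m, of n] in \<open>auto simp: S_def\<close>)
    also have "\<dots> \<le> exp (n*q*(m + m\<^sup>2)) / exp c"
      by (rule divide_right_mono) (use mgf_bound(1)[OF indep B q m, of n] in \<open>auto simp: S_def\<close>)
    also have "\<dots> = exp (n*q*(m + m\<^sup>2) - c)" by (simp add: exp_diff)
    finally show ?thesis .
  qed
  have "prob {\<omega>\<in>space M. n*q + t \<le> S \<omega>} = prob {\<omega>\<in>space M. l*(n*q + t) \<le> l * S \<omega>}"
    using l by simp
  also have "\<dots> \<le> exp (n*q*(l + l\<^sup>2) - l*(n*q+t))" by (rule gen) (use l in auto)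
  also have "\<dots> \<le> exp (-(t\<^sup>2/(4*a+2*t)))"
    using key by (simp add: a_def algebra_simps)
  finally show "prob {\<omega>\<in>space M. n*q + t \<le> (\<Sum>i<n. indicator B (X i \<omega>))} \<le> exp (-(t\<^sup>2/(4*(n*q)+2*t)))"
    by (simp add: S_def a_def)
  have "prob {\<omega>\<in>space M. S \<omega> \<le> n*q - t} = prob {\<omega>\<in>space M. (-l)*(n*q - t) \<le> (-l) * S \<omega>}"
    using l by simp
  also have "\<dots> \<le> exp (n*q*((-l) + (-l)\<^sup>2) - (-l)*(n*q-t))" by (rule gen) (use l in auto)
  also have "\<dots> \<le> exp (-(t\<^sup>2/(4*a+2*t)))"
    using key by (simp add: a_def algebra_simps)
  finally show "prob {\<omega>\<in>space M. (\<Sum>i<n. indicator B (X i \<omega>)) \<le> n*q - t} \<le> exp (-(t\<^sup>2/(4*(n*q)+2*t)))"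
    by (simp add: S_def a_def)
qed

end


lemma quantile_facts:
  fixes F :: "real \<Rightarrow> real"
  assumes mono: "mono F" and lo: "\<exists>x. F x < u" and hi: "\<exists>x. u \<le> F x"
    and der: "DERIV F (quantile F u) :> d" and d: "d > 0"
  shows "\<And>x. x < quantile F u \<Longrightarrow> F x < u"
    and "F (quantile F u) = u"
    and "\<And>x. x > quantile F u \<Longrightarrow> F x > u"
proof -
  define S where "S = {x. u \<le> F x}"
  define z where "z = quantile F u"
  have zS: "z = Inf S" by (simp add: z_def S_def quantile_def)
  have ne: "S \<noteq> {}" using hi by (auto simp: S_def)
  obtain x0 where x0: "F x0 < u" using lo by auto
  have bdd: "bdd_below S"
  proof (rule bdd_belowI)
    fix y assume "y \<in> S"
    then have "\<not> y \<le> x0" using x0 monoD[OF mono, of y x0] by (auto simp: S_def)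
    then show "x0 \<le> y" by simp
  qed
  show Q1: "F x < u" if "x < quantile F u" for x
  proof (rule ccontr)
    assume "\<not> F x < u"
    then have "x \<in> S" by (auto simp: S_def)
    then have "z \<le> x" unfolding zS by (rule cInf_lower[OF _ bdd])
    then show False using that by (simp add: z_def)
  qed
  have cont: "isCont F z" using der DERIV_isCont by (simp add: z_def)
  then have eps: "\<forall>r>0. \<exists>s>0. \<forall>x. x \<noteq> z \<and> norm (x - z) < s \<longrightarrow> norm (F x - F z) < r"
    by (simp add: isCont_def LIM_eq)
  show Q2: "F (quantile F u) = u"
  proof (rule ccontr)
    assume ne': "F (quantile F u) \<noteq> u"
    show False
    proof (cases "F z < u")
      case True
      obtain s where s: "s > 0" "\<forall>x. x \<noteq> z \<and> norm (x - z) < s \<longrightarrow> norm (F x - F z) < u - F z"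
        using eps True by (meson diff_gt_0_iff_gt)
      obtain y where y: "y \<in> S" "y < z + s" using cInf_less_iff[OF ne bdd, of "z+s"] s zS by auto
      have "z \<le> y" unfolding zS by (rule cInf_lower[OF y(1) bdd])
      show False
      proof (cases "y = z")
        case True then show False using y(1) \<open>F z < u\<close> by (auto simp: S_def)
      next
        case False
        then have "\<bar>F y - F z\<bar> < u - F z" using s(2) \<open>z \<le> y\<close> y(2) by auto
        then show False using y(1) by (auto simp: S_def)
      qed
    next
      case False
      then have gt: "F z > u" using ne' by (simp add: z_def)
      obtain s where s: "s > 0" "\<forall>x. x \<noteq> z \<and> norm (x - z) < s \<longrightarrow> norm (F x - F z) < F z - u"
        using eps gt by (meson diff_gt_0_iff_gt)
      have "\<bar>F (z - s/2) - F z\<bar> < F z - u" using s by auto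
      moreover have "F (z - s/2) < u" using Q1[of "z - s/2"] s by (simp add: z_def)
      ultimately show False by auto
    qed
  qed
  show "F x > u" if "x > quantile F u" for x
  proof -
    obtain e where e: "e > 0" "\<forall>h>0. h < e \<longrightarrow> F z < F (z + h)"
      using DERIV_pos_inc_right[OF der d] by (auto simp: z_def)
    define h where "h = min (x - z) (e/2)"
    have h: "h > 0" "h < e" "z + h \<le> x" using that e by (auto simp: h_def z_def)
    have "u < F (z + h)" using e h Q2 by (auto simp: z_def)
    also have "\<dots> \<le> F x" using mono h(3) by (auto simp: mono_def)
    finally show ?thesis .
  qed
qed



lemma card_le_sum_ind:
  fixes X :: "nat \<Rightarrow> 'a \<Rightarrow> real" and n :: nat
  shows   "real (card {i \<in> {..<n}. X i \<omega> \<le> x}) = (\<Sum>i<n. indicator {..x} (X i \<omega>) :: real)"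
proof -
  have "real (card {i\<in>{..<n}. X i \<omega> \<le> x}) = (\<Sum>i\<in>{i\<in>{..<n}. X i \<omega> \<le> x}. 1)" by simp
  also have "\<dots> = (\<Sum>i<n. if X i \<omega> \<le> x then 1 else 0)" by (rule sum.inter_filter) simp
  also have "\<dots> = (\<Sum>i<n. indicator {..x} (X i \<omega>))" by (rule sum.cong) (auto simp: indicator_def)
  finally show ?thesis .
qed

lemma emp_quantile:
  fixes X :: "nat \<Rightarrow> 'a \<Rightarrow> real"
  assumes k: "1 \<le> k" "k \<le> n"
  shows "\<And>x. x < quantile (emp_df X n \<omega>) (real k / real n) \<Longrightarrow> (\<Sum>i<n. indicator {..x} (X i \<omega>) :: real) < k"
    and "real k \<le> (\<Sum>i<n. indicator {..quantile (emp_df X n \<omega>) (real k / real n)} (X i \<omega>) :: real)"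
proof -
  define Nr where "Nr x = (\<Sum>i<n. indicator {..x} (X i \<omega>) :: real)" for x
  have n: "n > 0" using k by auto
  define S where "S = {x. real k / real n \<le> emp_df X n \<omega> x}"
  have S: "S = {x. real k \<le> Nr x}"
    using n by (auto simp: S_def emp_df_def Nr_def card_le_sum_ind[symmetric] divide_le_cancel)
  have q: "quantile (emp_df X n \<omega>) (real k / real n) = Inf S" by (simp add: quantile_def S_def)
  define T where "T = (\<lambda>i. X i \<omega>) ` {..<n}"
  have T: "finite T" "T \<noteq> {}" using n by (auto simp: T_def)
  have ex: "\<exists>i<n. X i \<omega> \<le> x" if "x \<in> S" for x
  proof (rule ccontr)
    assume "\<not> ?thesis"
    then have "Nr x = 0" by (auto simp: Nr_def indicator_def)
    then show False using that k S by auto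
  qed
  have bdd: "bdd_below S"
  proof (rule bdd_belowI[of _ "Min T"])
    fix x assume "x \<in> S"
    then obtain i where "i < n" "X i \<omega> \<le> x" using ex by blast
    then have "X i \<omega> \<in> T" by (auto simp: T_def)
    then have "Min T \<le> X i \<omega>" using T by simp
    then show "Min T \<le> x" using \<open>X i \<omega> \<le> x\<close> by simp
  qed
  have NrMax: "Nr (Max T) = n"
  proof -
    have "Nr (Max T) = (\<Sum>i<n. 1)"
      unfolding Nr_def by (rule sum.cong) (use T in \<open>auto simp: T_def indicator_def\<close>)
    then show ?thesis by simp
  qed
  have MaxS: "Max T \<in> S" using NrMax k S by auto
  have SneT: "S \<inter> T \<noteq> {}" using MaxS Max_in[OF T] by blast
  define \<mu> where "\<mu> = Min (S \<inter> T)"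
  have \<mu>S: "\<mu> \<in> S" using SneT T Min_in[of "S \<inter> T"] by (auto simp: \<mu>_def)
  have low: "\<mu> \<le> x" if "x \<in> S" for x
  proof -
    define P where "P = {y\<in>T. y \<le> x}"
    have P: "finite P" "P \<noteq> {}" using ex[OF that] T by (auto simp: P_def T_def)
    define t where "t = Max P"
    have tP: "t \<in> P" using P by (simp add: t_def)
    have "Nr t = Nr x"
      unfolding Nr_def
    proof (rule sum.cong[OF refl])
      fix i assume "i \<in> {..<n}"
      then have "X i \<omega> \<in> T" by (auto simp: T_def)
      then have "X i \<omega> \<le> x \<longleftrightarrow> X i \<omega> \<le> t"
      proof (intro iffI)
        assume "X i \<omega> \<le> x" then have "X i \<omega> \<in> P" using \<open>X i \<omega> \<in> T\<close> by (simp add: P_def)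
        then show "X i \<omega> \<le> t" using P by (simp add: t_def)
      next
        assume "X i \<omega> \<le> t" then show "X i \<omega> \<le> x" using tP by (simp add: P_def)
      qed
      then show "indicator {..t} (X i \<omega>) = (indicator {..x} (X i \<omega>) :: real)"
        by (auto simp: indicator_def)
    qed
    then have "t \<in> S \<inter> T" using that tP S by (auto simp: P_def)
    then have "\<mu> \<le> t" using T by (simp add: \<mu>_def)
    also have "t \<le> x" using tP by (simp add: P_def)
    finally show ?thesis .
  qed
  have qeq: "quantile (emp_df X n \<omega>) (real k / real n) = \<mu>"
    unfolding q
  proof (rule antisym)
    show "Inf S \<le> \<mu>" by (rule cInf_lower[OF \<mu>S bdd])
    show "\<mu> \<le> Inf S" using MaxS by (intro cInf_greatest) (auto intro: low)
  qed
  show "real k \<le> (\<Sum>i<n. indicator {..quantile (emp_df X n \<omega>) (real k / real n)} (X i \<omega>) :: real)"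
    using \<mu>S S qeq by (simp add: Nr_def)
  show "(\<Sum>i<n. indicator {..x} (X i \<omega>) :: real) < k" if "x < quantile (emp_df X n \<omega>) (real k / real n)" for x
  proof (rule ccontr)
    assume "\<not> ?thesis"
    then have "x \<in> S" using S by (auto simp: Nr_def)
    then have "\<mu> \<le> x" by (rule low)
    then show False using that qeq by simp
  qed
qed



lemma bahadur_det:
  fixes F Nr :: "real \<Rightarrow> real" and x :: "int \<Rightarrow> real" and m :: int
    and p \<delta> kk Nz b az nn \<xi> :: real
  assumes monoF: "mono F" and monoN: "mono Nr"
    and xF: "\<And>j. j \<in> {-m..m} \<Longrightarrow> F (x j) = p + j*\<delta>"
    and xstrict: "\<And>j y. j \<in> {-m..m} \<Longrightarrow> y > x j \<Longrightarrow> F y > F (x j)"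
    and E1: "\<And>y. y < \<xi> \<Longrightarrow> Nr y < kk"
    and E2: "kk \<le> Nr \<xi>"
    and good: "\<And>j. j \<in> {-m..m} \<Longrightarrow> \<bar>Nr (x j) - Nz - nn*j*\<delta>\<bar> < b"
    and good0: "\<bar>Nz - kk\<bar> < az"
    and big: "az + b \<le> nn*m*\<delta>"
    and d: "\<delta> > 0" and nn: "nn > 0" and kk: "kk = nn*p" and m: "m \<ge> 0"
  shows "p - m*\<delta> < F \<xi>" "F \<xi> \<le> p + m*\<delta>" "\<bar>nn*(F \<xi> - p) + Nz - kk\<bar> < nn*\<delta> + b"
proof -
  have mm: "-m \<in> {-m..m}" "m \<in> {-m..m}" using m by auto
  show lowV: "p - m*\<delta> < F \<xi>"
  proof (rule ccontr)
    assume "\<not> ?thesis"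
    then have "F \<xi> \<le> F (x (-m))" using xF[OF mm(1)] by simp
    then have "\<xi> \<le> x (-m)" using xstrict[OF mm(1), of \<xi>] by force
    then have "kk \<le> Nr (x (-m))" using E2 monoD[OF monoN] by (meson order_trans)
    moreover have "Nr (x (-m)) < Nz - nn*m*\<delta> + b" using good[OF mm(1)] by auto
    ultimately show False using good0 big by auto
  qed
  show upV: "F \<xi> \<le> p + m*\<delta>"
  proof (rule ccontr)
    assume "\<not> ?thesis"
    then have "F \<xi> > F (x m)" using xF[OF mm(2)] by simp
    then have "\<xi> > x m" using monoD[OF monoF, of \<xi> "x m"] by force
    then have "Nr (x m) < kk" using E1 by blast
    moreover have "Nr (x m) > Nz + nn*m*\<delta> - b" using good[OF mm(2)] by auto
    ultimately show False using good0 big by auto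
  qed
  define j where "j = \<lceil>(F \<xi> - p)/\<delta>\<rceil> - 1"
  have j1: "j < (F \<xi> - p)/\<delta>" "(F \<xi> - p)/\<delta> \<le> j + 1" unfolding j_def by linarith+
  have jlo: "p + j*\<delta> < F \<xi>" using j1(1) d by (simp add: field_simps)
  have jhi: "F \<xi> \<le> p + (j+1)*\<delta>" using j1(2) d by (simp add: field_simps)
  have "(F \<xi> - p)/\<delta> > -m" using lowV d by (simp add: field_simps)
  then have "j \<ge> -m" unfolding j_def by linarith
  have "(F \<xi> - p)/\<delta> \<le> m" using upV d by (simp add: field_simps)
  then have "j + 1 \<le> m" unfolding j_def by linarith
  have jin: "j \<in> {-m..m}" "j+1 \<in> {-m..m}" using \<open>j \<ge> -m\<close> \<open>j+1 \<le> m\<close> by auto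
  have "F \<xi> > F (x j)" using jlo xF[OF jin(1)] by simp
  then have "\<xi> > x j" using monoD[OF monoF, of \<xi> "x j"] by force
  then have Nj: "Nr (x j) < kk" using E1 by blast
  have "F \<xi> \<le> F (x (j+1))" using jhi xF[OF jin(2)] by simp
  then have "\<xi> \<le> x (j+1)" using xstrict[OF jin(2), of \<xi>] by force
  then have Nj1: "kk \<le> Nr (x (j+1))" using E2 monoD[OF monoN] by (meson order_trans)
  have g1: "\<bar>Nr (x j) - Nz - nn*j*\<delta>\<bar> < b" using good[OF jin(1)] .
  have g2: "\<bar>Nr (x (j+1)) - Nz - nn*(j+1)*\<delta>\<bar> < b" using good[OF jin(2)] by simp
  have "nn*(F \<xi> - p) \<le> nn*((j+1)*\<delta>)" using jhi nn by (intro mult_left_mono) auto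
  moreover have "nn*(F \<xi> - p) \<ge> nn*(j*\<delta>)" using jlo nn by (intro mult_left_mono) auto
  ultimately show "\<bar>nn*(F \<xi> - p) + Nz - kk\<bar> < nn*\<delta> + b"
    using g1 g2 Nj Nj1 by (auto simp: algebra_simps abs_less_iff)
qed



lemma mvt_det:
  fixes F G f g :: "real \<Rightarrow> real" and lo hi p \<xi> :: real
  assumes monoF: "mono F"
    and good: "\<And>u. u \<in> {lo..hi} \<Longrightarrow> F (quantile F u) = u \<and> (\<forall>x<quantile F u. F x < u) \<and> (\<forall>x>quantile F u. F x > u)"
    and der: "\<And>u. u \<in> {lo..hi} \<Longrightarrow> DERIV F (quantile F u) :> f (quantile F u) \<and> f (quantile F u) > 0
                 \<and> DERIV G (quantile F u) :> g (quantile F u)"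
    and p: "p \<in> {lo..hi}" and V: "F \<xi> \<in> {lo..hi}"
  shows "\<exists>w. min p (F \<xi>) \<le> w \<and> w \<le> max p (F \<xi>) \<and>
     G \<xi> - G (quantile F p) = (F \<xi> - p) * (g (quantile F w) / f (quantile F w))"
proof -
  define q where "q = quantile F"
  define a where "a = q p"
  have lohi: "lo \<in> {lo..hi}" "hi \<in> {lo..hi}" using p by auto
  have inr: "q lo \<le> y \<and> y \<le> q hi" if "F y \<in> {lo..hi}" for y
  proof
    show "q lo \<le> y"
    proof (rule ccontr)
      assume "\<not> ?thesis" then have "F y < lo" using good[OF lohi(1)] by (auto simp: q_def)
      then show False using that by auto
    qed
    show "y \<le> q hi"
    proof (rule ccontr)
      assume "\<not> ?thesis" then have "F y > hi" using good[OF lohi(2)] by (auto simp: q_def)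
      then show False using that by auto
    qed
  qed
  have Fa: "F a = p" using good[OF p] by (simp add: a_def q_def)
  have a_in: "q lo \<le> a \<and> a \<le> q hi" using inr[of a] Fa p by simp
  have xi_in: "q lo \<le> \<xi> \<and> \<xi> \<le> q hi" using inr[OF V] .
  have yfacts: "F y \<in> {lo..hi} \<and> q (F y) = y" if "q lo \<le> y" "y \<le> q hi" for y
  proof -
    have "lo \<le> F y" using monoD[OF monoF that(1)] good[OF lohi(1)] by (simp add: q_def)
    moreover have "F y \<le> hi" using monoD[OF monoF that(2)] good[OF lohi(2)] by (simp add: q_def)
    ultimately have v: "F y \<in> {lo..hi}" by simp
    have "q (F y) = y"
    proof (rule ccontr)
      assume ne: "q (F y) \<noteq> y"
      show False
      proof (cases "q (F y) < y")
        case True then have "F y > F y" using good[OF v] by (auto simp: q_def)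
        then show False by simp
      next
        case False then have "y < q (F y)" using ne by simp
        then have "F y < F y" using good[OF v] by (auto simp: q_def)
        then show False by simp
      qed
    qed
    then show ?thesis using v by simp
  qed
  have dy: "DERIV F y :> f y \<and> f y > 0 \<and> DERIV G y :> g y" if "q lo \<le> y" "y \<le> q hi" for y
    using der[of "F y"] yfacts[OF that] by (simp add: q_def)
  have cF: "isCont F z" if "q lo \<le> z" "z \<le> q hi" for z using dy[OF that] DERIV_isCont by blast
  have cG: "isCont G z" if "q lo \<le> z" "z \<le> q hi" for z using dy[OF that] DERIV_isCont by blast
  have dF: "DERIV F z :> f z" if "q lo \<le> z" "z \<le> q hi" for z using dy[OF that] by blast
  have dG: "DERIV G z :> g z" if "q lo \<le> z" "z \<le> q hi" for z using dy[OF that] by blast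
  show ?thesis
  proof (cases "\<xi> = a")
    case True
    then show ?thesis using Fa by (intro exI[of _ p]) (auto simp: a_def q_def)
  next
    case False
    show ?thesis
    proof (cases "a < \<xi>")
      case True
      have r: "\<exists>c. a < c \<and> c < \<xi> \<and> (F \<xi> - F a) * g c = (G \<xi> - G a) * f c"
        by (rule GMVT'[OF True]) (use a_in xi_in in \<open>(meson cF cG dF dG order_trans less_imp_le)+\<close>)
      then obtain c where c: "a < c" "c < \<xi>" "(F \<xi> - F a) * g c = (G \<xi> - G a) * f c" by blast
      have cin: "q lo \<le> c" "c \<le> q hi" using c a_in xi_in by auto
      have fc: "f c > 0" using dy[OF cin] by simp
      have qc: "q (F c) = c" using yfacts[OF cin] by simp
      have "G \<xi> - G a = (F \<xi> - p) * (g c / f c)" using c(3) fc Fa by (simp add: field_simps)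
      moreover have "F a \<le> F c" "F c \<le> F \<xi>" using c monoD[OF monoF] by auto
      ultimately show ?thesis using Fa qc
        by (intro exI[of _ "F c"]) (auto simp: a_def q_def)
    next
      case False
      then have lt: "\<xi> < a" using \<open>\<xi> \<noteq> a\<close> by simp
      have r: "\<exists>c. \<xi> < c \<and> c < a \<and> (F a - F \<xi>) * g c = (G a - G \<xi>) * f c"
        by (rule GMVT'[OF lt]) (use a_in xi_in in \<open>(meson cF cG dF dG order_trans less_imp_le)+\<close>)
      then obtain c where c: "\<xi> < c" "c < a" "(F a - F \<xi>) * g c = (G a - G \<xi>) * f c" by blast
      have cin: "q lo \<le> c" "c \<le> q hi" using c a_in xi_in by auto
      have fc: "f c > 0" using dy[OF cin] by simp
      have qc: "q (F c) = c" using yfacts[OF cin] by simp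
      have "G \<xi> - G a = (F \<xi> - p) * (g c / f c)" using c(3) fc Fa by (simp add: field_simps)
      moreover have "F \<xi> \<le> F c" "F c \<le> F a" using c monoD[OF monoF] by auto
      ultimately show ?thesis using Fa qc
        by (intro exI[of _ "F c"]) (auto simp: a_def q_def)
    qed
  qed
qed



lemma open_nbhd: "open (U::real set) \<Longrightarrow> x \<in> U \<Longrightarrow> \<exists>d>0. \<forall>u. \<bar>u - x\<bar> < d \<longrightarrow> u \<in> U"
  unfolding open_contains_ball subset_iff by (simp add: dist_real_def) (metis abs_minus_commute)

lemma A1_interval:
  fixes p :: "nat \<Rightarrow> real"
  assumes A1: "cond_A1 F f U p" and p01: "\<And>n. 0 \<le> p n \<and> p n \<le> 1"
  shows "\<exists>lo hi \<eta>. \<eta> > 0 \<and> (\<forall>u. 0 < u \<and> u < 1 \<and> lo - \<eta> \<le> u \<and> u \<le> hi + \<eta> \<longrightarrow> u \<in> U)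
           \<and> eventually (\<lambda>n. lo - \<eta>/2 < p n \<and> p n < hi + \<eta>/2) sequentially"
proof -
  define a1 where "a1 = liminf (\<lambda>n. ereal (p n))"
  define a2 where "a2 = limsup (\<lambda>n. ereal (p n))"
  have opU: "open U" using A1 by (simp add: cond_A1_def)
  have a1ge: "0 \<le> a1" unfolding a1_def by (rule Liminf_bounded) (use p01 in auto)
  have a2le: "a2 \<le> 1" unfolding a2_def by (rule Limsup_bounded) (use p01 in auto)
  have a12: "a1 \<le> a2" unfolding a1_def a2_def by (rule Liminf_le_Limsup) simp
  obtain A1r where A1r: "a1 = ereal A1r" using a1ge a12 a2le by (cases a1) auto
  obtain A2r where A2r: "a2 = ereal A2r" using a1ge a12 a2le by (cases a2) auto
  have r: "0 \<le> A1r" "A1r \<le> A2r" "A2r \<le> 1" using a1ge a12 a2le A1r A2r by auto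
  have ex: "\<exists>\<epsilon>::real. 0 < \<epsilon> \<and> \<epsilon> \<le> 1 \<and>
        (a1 = 0 \<and> a2 = 0 \<longrightarrow> {0<..<\<epsilon>} \<subseteq> U) \<and>
        (a1 = 1 \<and> a2 = 1 \<longrightarrow> {1-\<epsilon><..<1} \<subseteq> U) \<and>
        (a1 = 0 \<and> 0 < a2 \<and> a2 < 1 \<longrightarrow> {0<..real_of_ereal a2} \<subseteq> U) \<and>
        (0 < a1 \<and> a1 < a2 \<and> a2 = 1 \<longrightarrow> {real_of_ereal a1..<1} \<subseteq> U) \<and>
        (0 < a1 \<and> a1 \<le> a2 \<and> a2 < 1 \<longrightarrow> {real_of_ereal a1..real_of_ereal a2} \<subseteq> U) \<and>
        (a1 = 0 \<and> a2 = 1 \<longrightarrow> {0<..<1} \<subseteq> U)"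
    using A1 unfolding cond_A1_def Let_def a1_def a2_def by (elim conjE)
  then obtain \<epsilon> :: real where e0: "0 < \<epsilon> \<and> \<epsilon> \<le> 1 \<and>
        (a1 = 0 \<and> a2 = 0 \<longrightarrow> {0<..<\<epsilon>} \<subseteq> U) \<and>
        (a1 = 1 \<and> a2 = 1 \<longrightarrow> {1-\<epsilon><..<1} \<subseteq> U) \<and>
        (a1 = 0 \<and> 0 < a2 \<and> a2 < 1 \<longrightarrow> {0<..real_of_ereal a2} \<subseteq> U) \<and>
        (0 < a1 \<and> a1 < a2 \<and> a2 = 1 \<longrightarrow> {real_of_ereal a1..<1} \<subseteq> U) \<and>
        (0 < a1 \<and> a1 \<le> a2 \<and> a2 < 1 \<longrightarrow> {real_of_ereal a1..real_of_ereal a2} \<subseteq> U) \<and>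
        (a1 = 0 \<and> a2 = 1 \<longrightarrow> {0<..<1} \<subseteq> U)" by (rule exE)
  have e: "0 < \<epsilon>" "\<epsilon> \<le> 1" using e0 by auto
  have c1: "A1r = 0 \<and> A2r = 0 \<longrightarrow> {0<..<\<epsilon>} \<subseteq> U" using e0 unfolding A1r A2r by (simp add: zero_ereal_def one_ereal_def)
  have c2: "A1r = 1 \<and> A2r = 1 \<longrightarrow> {1-\<epsilon><..<1} \<subseteq> U" using e0 unfolding A1r A2r by (simp add: zero_ereal_def one_ereal_def)
  have c3: "A1r = 0 \<and> 0 < A2r \<and> A2r < 1 \<longrightarrow> {0<..A2r} \<subseteq> U" using e0 unfolding A1r A2r by (simp add: zero_ereal_def one_ereal_def)
  have c4: "0 < A1r \<and> A1r < A2r \<and> A2r = 1 \<longrightarrow> {A1r..<1} \<subseteq> U" using e0 unfolding A1r A2r by (simp add: zero_ereal_def one_ereal_def)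
  have c5: "0 < A1r \<and> A1r \<le> A2r \<and> A2r < 1 \<longrightarrow> {A1r..A2r} \<subseteq> U" using e0 unfolding A1r A2r by (simp add: zero_ereal_def one_ereal_def)
  have c6: "A1r = 0 \<and> A2r = 1 \<longrightarrow> {0<..<1} \<subseteq> U" using e0 unfolding A1r A2r by (simp add: zero_ereal_def one_ereal_def)
  have ev_lo: "eventually (\<lambda>n. y < p n) sequentially" if "y < A1r" for y
    using less_LiminfD[of "ereal y" sequentially "\<lambda>n. ereal (p n)"] that A1r a1_def by auto
  have ev_hi: "eventually (\<lambda>n. p n < y) sequentially" if "A2r < y" for y
    using Limsup_lessD[where y="ereal y" and F=sequentially and f="\<lambda>n. ereal (p n)"] that A2r a2_def by auto
  have fin: "\<exists>lo hi \<eta>. \<eta> > 0 \<and> (\<forall>u. 0 < u \<and> u < 1 \<and> lo - \<eta> \<le> u \<and> u \<le> hi + \<eta> \<longrightarrow> u \<in> U)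
           \<and> eventually (\<lambda>n. lo - \<eta>/2 < p n \<and> p n < hi + \<eta>/2) sequentially"
    if "\<eta> > 0" "\<forall>u. 0 < u \<and> u < 1 \<and> lo - \<eta> \<le> u \<and> u \<le> hi + \<eta> \<longrightarrow> u \<in> U"
       "lo - \<eta>/2 < A1r" "A2r < hi + \<eta>/2" for lo hi \<eta>
    using that ev_lo[OF that(3)] ev_hi[OF that(4)] by (intro exI[of _ lo] exI[of _ hi] exI[of _ \<eta>]) (auto intro: eventually_conj)
  consider "A2r = 0" | "A1r = 1" | "A1r = 0 \<and> 0 < A2r \<and> A2r < 1" | "0 < A1r \<and> A1r < 1 \<and> A2r = 1"
    | "0 < A1r \<and> A2r < 1" | "A1r = 0 \<and> A2r = 1" using r by linarith
  then show ?thesis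
  proof cases
    case 1
    then have "A1r = 0" using r by simp
    then show ?thesis using c1 1 e by (intro fin[of "\<epsilon>/4" 0 "\<epsilon>/2"]) auto
  next
    case 2
    then have "A2r = 1" using r by simp
    then show ?thesis using c2 2 e by (intro fin[of "\<epsilon>/4" "1 - \<epsilon>/2" 1]) auto
  next
    case 3
    have "A2r \<in> U" using c3 3 by auto
    then obtain d where d: "d > 0" "\<forall>u. \<bar>u - A2r\<bar> < d \<longrightarrow> u \<in> U" using open_nbhd[OF opU] by blast
    show ?thesis
    proof (rule fin[of "d/2" 0 A2r])
      show "\<forall>u. 0 < u \<and> u < 1 \<and> 0 - d/2 \<le> u \<and> u \<le> A2r + d/2 \<longrightarrow> u \<in> U"
      proof (intro allI impI)
        fix u assume u: "0 < u \<and> u < 1 \<and> 0 - d/2 \<le> u \<and> u \<le> A2r + d/2"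
        show "u \<in> U"
        proof (cases "u \<le> A2r")
          case True then show ?thesis using c3 3 u by auto
        next
          case False then show ?thesis using d u by auto
        qed
      qed
    qed (use d 3 in auto)
  next
    case 4
    have "A1r \<in> U" using c4 4 by auto
    then obtain d where d: "d > 0" "\<forall>u. \<bar>u - A1r\<bar> < d \<longrightarrow> u \<in> U" using open_nbhd[OF opU] by blast
    show ?thesis
    proof (rule fin[of "d/2" A1r 1])
      show "\<forall>u. 0 < u \<and> u < 1 \<and> A1r - d/2 \<le> u \<and> u \<le> 1 + d/2 \<longrightarrow> u \<in> U"
      proof (intro allI impI)
        fix u assume u: "0 < u \<and> u < 1 \<and> A1r - d/2 \<le> u \<and> u \<le> 1 + d/2"
        show "u \<in> U"
        proof (cases "A1r \<le> u")
          case True then show ?thesis using c4 4 u by auto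
        next
          case False then show ?thesis using d u by auto
        qed
      qed
    qed (use d 4 in auto)
  next
    case 5
    have "A1r \<in> U" "A2r \<in> U" using c5 5 r by auto
    then obtain d1 d2 where d1: "d1 > 0" "\<forall>u. \<bar>u - A1r\<bar> < d1 \<longrightarrow> u \<in> U"
      and d2: "d2 > 0" "\<forall>u. \<bar>u - A2r\<bar> < d2 \<longrightarrow> u \<in> U" using open_nbhd[OF opU] by meson
    define d where "d = min d1 d2"
    show ?thesis
    proof (rule fin[of "d/2" A1r A2r])
      show "\<forall>u. 0 < u \<and> u < 1 \<and> A1r - d/2 \<le> u \<and> u \<le> A2r + d/2 \<longrightarrow> u \<in> U"
      proof (intro allI impI)
        fix u assume u: "0 < u \<and> u < 1 \<and> A1r - d/2 \<le> u \<and> u \<le> A2r + d/2"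
        show "u \<in> U"
        proof (cases "A1r \<le> u")
          case True
          show ?thesis
          proof (cases "u \<le> A2r")
            case True then show ?thesis using c5 5 r \<open>A1r \<le> u\<close> by auto
          next
            case False then show ?thesis using d2 u d1 by (auto simp: d_def)
          qed
        next
          case False then show ?thesis using d1 u d2 by (auto simp: d_def)
        qed
      qed
    qed (use d1 d2 in \<open>auto simp: d_def\<close>)
  next
    case 6
    then show ?thesis using c6 by (intro fin[of 1 0 1]) auto
  qed
qed



locale setting = prob_space M for M :: "'a measure" +
  fixes X :: "nat \<Rightarrow> 'a \<Rightarrow> real" and F f G g :: "real \<Rightarrow> real" and U :: "real set" and k :: "nat \<Rightarrow> nat"
  assumes indep: "indep_vars (\<lambda>_. borel) X UNIV"
    and df: "\<And>i x. measure M {\<omega> \<in> space M. X i \<omega> \<le> x} = F x"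
    and k_le: "\<And>n. k n \<le> n"
    and A1: "cond_A1 F f U (\<lambda>n. real (k n) / real n)"
    and G_deriv: "\<forall>x \<in> quantile F ` U. (G has_real_derivative g x) (at x)"
begin

lemma rv[measurable]: "X i \<in> borel_measurable M"
  using indep unfolding indep_vars_def by auto

lemma Fmono: "mono F"
proof (rule monoI)
  fix x y :: real assume "x \<le> y"
  then have "measure M {\<omega> \<in> space M. X 0 \<omega> \<le> x} \<le> measure M {\<omega> \<in> space M. X 0 \<omega> \<le> y}"
    by (intro finite_measure_mono) auto
  then show "F x \<le> F y" using df by simp
qed

lemma F_lo: "u > 0 \<Longrightarrow> \<exists>x. F x < u"
proof -
  assume u: "u > 0"
  define A where "A n = {\<omega> \<in> space M. X 0 \<omega> \<le> - real n}" for n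
  have "(\<lambda>n. measure M (A n)) \<longlonglongrightarrow> measure M (\<Inter>n. A n)"
    by (rule finite_Lim_measure_decseq) (auto simp: A_def decseq_def)
  moreover have "(\<Inter>n. A n) = {}"
  proof -
    have "\<omega> \<notin> A (nat \<lceil>- X 0 \<omega>\<rceil> + 1)" for \<omega> by (auto simp: A_def) linarith
    then show ?thesis by blast
  qed
  ultimately have "(\<lambda>n. measure M (A n)) \<longlonglongrightarrow> 0" by simp
  from LIMSEQ_D[OF this u] obtain n where "norm (measure M (A n) - 0) < u" by blast
  then have "measure M (A n) < u" by simp
  then show ?thesis using df by (auto simp: A_def)
qed

lemma F_hi: "u < 1 \<Longrightarrow> \<exists>x. u \<le> F x"
proof -
  assume u: "u < 1"
  define A where "A n = {\<omega> \<in> space M. X 0 \<omega> \<le> real n}" for n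
  have "(\<lambda>n. measure M (A n)) \<longlonglongrightarrow> measure M (\<Union>n. A n)"
    by (rule finite_Lim_measure_incseq) (auto simp: A_def incseq_def)
  moreover have "(\<Union>n. A n) = space M"
  proof -
    have "\<omega> \<in> A (nat \<lceil>X 0 \<omega>\<rceil>)" if "\<omega> \<in> space M" for \<omega> using that by (auto simp: A_def) linarith
    then show ?thesis by (auto simp: A_def)
  qed
  ultimately have "(\<lambda>n. measure M (A n)) \<longlonglongrightarrow> 1" by (simp add: prob_space)
  from LIMSEQ_D[OF this, of "1 - u"] u obtain n where "norm (measure M (A n) - 1) < 1 - u" by auto
  then have "measure M (A n) > u" by simp
  then show ?thesis using df by (auto simp: A_def intro: less_imp_le)
qed

lemma U01: "U \<subseteq> {0<..<1}" using A1 by (simp add: cond_A1_def)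

lemma derF: "u \<in> U \<Longrightarrow> DERIV F (quantile F u) :> f (quantile F u) \<and> f (quantile F u) > 0"
  using A1 by (auto simp: cond_A1_def)

lemma derG: "u \<in> U \<Longrightarrow> DERIV G (quantile F u) :> g (quantile F u)"
  using G_deriv by auto

lemma qfacts: assumes "u \<in> U"
  shows "F (quantile F u) = u \<and> (\<forall>x<quantile F u. F x < u) \<and> (\<forall>x>quantile F u. F x > u)"
proof -
  have u: "0 < u" "u < 1" using U01 assms by auto
  have d: "DERIV F (quantile F u) :> f (quantile F u)" "f (quantile F u) > 0" using derF[OF assms] by auto
  show ?thesis using quantile_facts[OF Fmono F_lo[OF u(1)] F_hi[OF u(2)] d] by blast
qed

lemma prob_le: "prob {\<omega> \<in> space M. X i \<omega> \<in> {..x}} = F x" using df by simp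

lemma prob_gt: "prob {\<omega> \<in> space M. X i \<omega> \<in> {x<..}} = 1 - F x"
proof -
  have "{\<omega> \<in> space M. X i \<omega> \<in> {x<..}} = space M - {\<omega> \<in> space M. X i \<omega> \<le> x}" by auto
  then show ?thesis using df[of i x] by (simp add: prob_compl)
qed

lemma prob_int: "a \<le> b \<Longrightarrow> prob {\<omega> \<in> space M. X i \<omega> \<in> {a<..b}} = F b - F a"
proof -
  assume ab: "a \<le> b"
  have "{\<omega> \<in> space M. X i \<omega> \<in> {a<..b}} = {\<omega> \<in> space M. X i \<omega> \<le> b} - {\<omega> \<in> space M. X i \<omega> \<le> a}" by auto
  moreover have "{\<omega> \<in> space M. X i \<omega> \<le> a} \<subseteq> {\<omega> \<in> space M. X i \<omega> \<le> b}" using ab by auto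
  ultimately show ?thesis using df by (simp add: finite_measure_Diff)
qed

end


lemma theta_facts:
  fixes \<Theta> :: real assumes t: "0 < \<Theta>" "\<Theta> \<le> 1"
  shows "\<Theta> powr (1/4) * \<Theta> powr (1/4) = \<Theta> powr (1/2)"
    "\<Theta> powr (1/4) * \<Theta> powr (1/2) = \<Theta> powr (3/4)"
    "\<Theta> powr (1/2) * \<Theta> powr (1/2) = \<Theta>"
    "\<Theta> powr (3/4) * \<Theta> powr (3/4) = \<Theta> * \<Theta> powr (1/2)"
    "\<Theta> powr (1/4) * \<Theta> powr (3/4) = \<Theta>"
    "0 < \<Theta> powr (1/4)" "\<Theta> powr (1/4) \<le> 1" "0 < \<Theta> powr (1/2)" "0 < \<Theta> powr (3/4)"
    "\<Theta> powr (3/4) \<le> \<Theta> powr (1/2)" "\<Theta> powr (1/2) \<le> \<Theta> powr (1/4)" "\<Theta> powr (1/2) \<le> 1"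
proof -
  show a: "\<Theta> powr (1/4) * \<Theta> powr (1/4) = \<Theta> powr (1/2)" by (simp add: powr_add[symmetric])
  show b: "\<Theta> powr (1/4) * \<Theta> powr (1/2) = \<Theta> powr (3/4)" by (simp add: powr_add[symmetric])
  show "\<Theta> powr (1/2) * \<Theta> powr (1/2) = \<Theta>" using t by (simp add: powr_add[symmetric])
  have "\<Theta> powr (3/4) * \<Theta> powr (3/4) = \<Theta> powr (1 + 1/2)" by (simp add: powr_add[symmetric])
  also have "\<dots> = \<Theta> * \<Theta> powr (1/2)" using t by (subst powr_add) simp
  finally show "\<Theta> powr (3/4) * \<Theta> powr (3/4) = \<Theta> * \<Theta> powr (1/2)" .
  show "\<Theta> powr (1/4) * \<Theta> powr (3/4) = \<Theta>" using t by (simp add: powr_add[symmetric])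
  show p1: "0 < \<Theta> powr (1/4)" "0 < \<Theta> powr (1/2)" "0 < \<Theta> powr (3/4)" using t by auto
  show l1: "\<Theta> powr (1/4) \<le> 1" using t by (intro powr_le1) auto
  show l2: "\<Theta> powr (1/2) \<le> 1" using t by (intro powr_le1) auto
  show "\<Theta> powr (3/4) \<le> \<Theta> powr (1/2)" using b[symmetric] l1 p1 by (simp add: mult_left_le_one_le)
  show "\<Theta> powr (1/2) \<le> \<Theta> powr (1/4)" using a[symmetric] l1 p1 by (simp add: mult_left_le_one_le)
qed


lemma exp_to_powr: fixes \<rho> e a :: real assumes "\<rho> > 0" "e * ln \<rho> \<le> a" shows "exp (-a) \<le> \<rho> powr (-e)"
  using assms by (simp add: powr_def)

context setting begin

lemma tail:
  assumes B: "B \<in> sets borel" and q: "\<And>i. prob {\<omega>\<in>space M. X i \<omega> \<in> B} = q" and t: "0 < t"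
    and V: "real n * q \<le> V"
  shows "prob {\<omega>\<in>space M. real n*q + t \<le> (\<Sum>i<n. indicator B (X i \<omega>))} \<le> exp (-(t\<^sup>2/(4*V+2*t)))"
    and "prob {\<omega>\<in>space M. (\<Sum>i<n. indicator B (X i \<omega>)) \<le> real n*q - t} \<le> exp (-(t\<^sup>2/(4*V+2*t)))"
proof -
  have q0: "0 \<le> q" using q[of 0] by auto
  have le: "t\<^sup>2/(4*V+2*t) \<le> t\<^sup>2/(4*(real n*q)+2*t)"
  proof (rule frac_le)
    have "0 \<le> real n * q" using q0 by simp
    then show "0 < 4*(real n*q)+2*t" using t by linarith
  qed (use V t in auto)
  show "prob {\<omega>\<in>space M. real n*q + t \<le> (\<Sum>i<n. indicator B (X i \<omega>))} \<le> exp (-(t\<^sup>2/(4*V+2*t)))"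
    using chernoff(1)[OF indep B q t, of n] le by (meson exp_le_cancel_iff neg_le_iff_le order_trans)
  show "prob {\<omega>\<in>space M. (\<Sum>i<n. indicator B (X i \<omega>)) \<le> real n*q - t} \<le> exp (-(t\<^sup>2/(4*V+2*t)))"
    using chernoff(2)[OF indep B q t, of n] le by (meson exp_le_cancel_iff neg_le_iff_le order_trans)
qed

end


lemma pq_bound:
  fixes kk nn :: nat assumes "kk \<le> nn" "0 < nn"
  shows "real (min kk (nn - kk)) / real nn / 2 \<le> (real kk / real nn) * (1 - real kk / real nn)"
proof -
  have nr: "real nn > 0" using assms by simp
  have e: "real (min kk (nn - kk)) = min (real kk) (real nn - real kk)" using assms by (simp add: of_nat_diff)
  have key: "min (real kk) (real nn - real kk) * real nn \<le> 2 * (real kk * (real nn - real kk))"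
  proof (cases "real kk \<le> real nn - real kk")
    case True
    then have "real kk * real nn \<le> real kk * (2 * (real nn - real kk))" by (intro mult_left_mono) auto
    then show ?thesis using True by (simp add: algebra_simps)
  next
    case False
    then have "(real nn - real kk) * real nn \<le> (real nn - real kk) * (2 * real kk)"
      using assms by (intro mult_left_mono) auto
    then show ?thesis using False by (simp add: algebra_simps)
  qed
  have "(real kk / real nn) * (1 - real kk / real nn) = real kk * (real nn - real kk) / (real nn * real nn)"
    using nr by (simp add: field_simps)
  moreover have "min (real kk) (real nn - real kk) / real nn / 2 \<le> real kk * (real nn - real kk) / (real nn * real nn)"
    using key nr by (simp add: field_simps)
  ultimately show ?thesis using e by simp
qed

lemma final_ineq:
  fixes rr nn L P T3 \<Theta> :: real
  assumes rr: "rr > 0" and nn: "nn > 0" and L: "L = rr * \<Theta>" and \<Theta>: "\<Theta> > 0" and T3: "T3 = \<Theta> powr (3/4)"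
    and P: "rr / nn / 2 \<le> P"
  shows "rr * T3 / nn \<le> 2 * (P powr (1/4) * (L / nn) powr (3/4))"
proof -
  define z where "z = rr / nn"
  have z: "z > 0" using rr nn by (simp add: z_def)
  have "(L/nn) powr (3/4) = (z * \<Theta>) powr (3/4)" by (simp add: L z_def)
  also have "\<dots> = z powr (3/4) * T3" using z \<Theta> by (simp add: powr_mult T3)
  finally have 1: "(L/nn) powr (3/4) = z powr (3/4) * T3" .
  have a: "(z/2) powr (1/4) \<le> P powr (1/4)" using P z by (intro powr_mono2) (auto simp: z_def)
  have b: "(z/2) powr (1/4) = z powr (1/4) * (1/2) powr (1/4)" using powr_mult[of z "1/2" "1/4"] z by simp
  have c: "(1/2::real) powr 1 \<le> (1/2) powr (1/4)" by (rule powr_mono') auto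
  have "z powr (1/4) * (1/2) \<le> z powr (1/4) * (1/2) powr (1/4)"
    using c by (intro mult_left_mono) auto
  then have 2: "z powr (1/4) * (1/2) \<le> P powr (1/4)" using a b by linarith
  have "rr * T3 / nn = z powr (1/4) * z powr (3/4) * T3" using z rr nn by (simp add: powr_add[symmetric] z_def)
  also have "\<dots> = 2 * ((z powr (1/4) * (1/2)) * (z powr (3/4) * T3))" by simp
  also have "\<dots> \<le> 2 * (P powr (1/4) * (z powr (3/4) * T3))"
    using 2 T3 \<Theta> z by (intro mult_left_mono mult_right_mono) auto
  finally show ?thesis using 1 by simp
qed



context setting begin

lemma core:
  fixes n :: nat and \<rho> c \<alpha> \<beta> K :: real
  defines "rr \<equiv> real (min (k n) (n - k n))" and "L \<equiv> ln \<rho>" and "p \<equiv> real (k n) / real n"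
    and "C \<equiv> \<alpha> + \<beta> + 1"
  assumes kn: "1 \<le> k n" "k n < n"
    and L1: "1 \<le> L" and Lr: "L \<le> rr" and rho: "rr \<le> \<rho>"
    and ab: "\<alpha> > 0" "\<beta> > 0" and c: "c > 0"
    and e0: "c \<le> \<alpha>\<^sup>2/(4+2*\<alpha>)" and e1: "c + 1 \<le> \<beta>\<^sup>2/(4*(C+1)+2*\<beta>)"
    and intv: "\<And>u. \<bar>u - p\<bar> \<le> (C+1)*rr*(L/rr) powr (1/2)/real n \<Longrightarrow> u \<in> U"
    and PsiB: "Psi F (\<lambda>x. g x / f x) p (sqrt (rr * L / (real n)\<^sup>2)) (C+1)
        \<le> ereal (K * ((L/rr) powr (1/4) * (\<bar>g (quantile F p)\<bar> / f (quantile F p))))"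
  shows "measure M {\<omega> \<in> space M.
            \<bar>G (quantile (emp_df X n \<omega>) p) - G (quantile F p)
             + (emp_df X n \<omega> (quantile F p) - F (quantile F p)) * (g (quantile F p) / f (quantile F p))\<bar>
            > 2*(1+\<beta>+\<bar>K\<bar>*(C+1)) * (p * (1 - p)) powr (1/4) * (L / real n) powr (3/4)
                * (\<bar>g (quantile F p)\<bar> / f (quantile F p))}
         \<le> (2 + 2*(2*C+3)) * \<rho> powr (-c)"
proof -
  define q where "q = quantile F"
  define \<Theta> where "\<Theta> = L/rr"
  define T1 where "T1 = \<Theta> powr (1/4)"
  define T2 where "T2 = \<Theta> powr (1/2)"
  define T3 where "T3 = \<Theta> powr (3/4)"
  have n0: "real n > 0" using kn by auto
  have rr1: "rr \<ge> 1" using kn by (auto simp: rr_def)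
  have rho0: "\<rho> > 0" using rr1 rho by auto
  have \<Theta>: "0 < \<Theta>" "\<Theta> \<le> 1" using L1 Lr rr1 by (auto simp: \<Theta>_def)
  note th = theta_facts[OF \<Theta>, folded T1_def T2_def T3_def]
  have L\<Theta>: "L = rr * \<Theta>" using rr1 by (simp add: \<Theta>_def)
  have C: "C \<ge> \<alpha> + \<beta>" "C > 0" using ab by (auto simp: C_def)
  define m :: int where "m = \<lceil>C/T1\<rceil>"
  have CT1: "C/T1 > 0" using C th by auto
  have m1: "C/T1 \<le> m" "m \<le> C/T1 + 1" unfolding m_def by linarith+
  have m0: "m \<ge> 0" using m1 CT1 by linarith
  define \<delta> where "\<delta> = rr*T3/real n"
  define \<epsilon> where "\<epsilon> = (C+1)*rr*T2/real n"
  have \<delta>0: "\<delta> > 0" using rr1 th n0 by (simp add: \<delta>_def)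
  have nm\<delta>: "real n * m * \<delta> = m*rr*T3" using n0 by (simp add: \<delta>_def)
  define a0 where "a0 = \<alpha>*rr*T2"
  define b where "b = \<beta>*rr*T3"
  have a00: "a0 > 0" using ab rr1 th by (simp add: a0_def)
  have b0: "b > 0" using ab rr1 th by (simp add: b_def)
  have "C*rr*T2 = (C/T1)*rr*T3" using th by (simp add: field_simps flip: th(2))
  also have "\<dots> \<le> m*rr*T3" using m1 rr1 th by (intro mult_right_mono) auto
  finally have CmT: "C*rr*T2 \<le> m*rr*T3" .
  have big: "a0 + b \<le> real n * m * \<delta>"
  proof -
    have "a0 + b \<le> \<alpha>*rr*T2 + \<beta>*rr*T2" using th ab rr1 by (simp add: a0_def b_def)
    also have "\<dots> = (\<alpha>+\<beta>)*rr*T2" by (simp add: algebra_simps)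
    also have "\<dots> \<le> C*rr*T2" using C th rr1 by (intro mult_right_mono) auto
    finally show ?thesis using CmT nm\<delta> by linarith
  qed
  have m\<delta>V: "real n * m * \<delta> \<le> (C+1)*rr*T2"
  proof -
    have "m*rr*T3 \<le> (C/T1 + 1)*rr*T3" using m1 rr1 th by (intro mult_right_mono) auto
    also have "\<dots> = C*rr*T2 + rr*T3" using th by (simp add: field_simps flip: th(2))
    also have "\<dots> \<le> C*rr*T2 + rr*T2" using th rr1 by simp
    finally have "m*rr*T3 \<le> (C+1)*rr*T2" by (simp add: algebra_simps)
    then show ?thesis using nm\<delta> by linarith
  qed
  have m\<delta>\<epsilon>: "m*\<delta> \<le> \<epsilon>" using m\<delta>V n0 by (simp add: \<epsilon>_def field_simps)
  have \<epsilon>eq: "(C+1)*rr*(L/rr) powr (1/2)/real n = \<epsilon>" by (simp add: \<epsilon>_def T2_def \<Theta>_def)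
  have inU: "u \<in> U" if "\<bar>u - p\<bar> \<le> \<epsilon>" for u using intv[of u] that \<epsilon>eq by simp
  have \<epsilon>0: "\<epsilon> > 0" using C th rr1 n0 by (simp add: \<epsilon>_def)
  have pU: "p \<in> U" using inU \<epsilon>0 by simp
  have gridU: "p + j*\<delta> \<in> U" if "j \<in> {-m..m}" for j
  proof -
    have "\<bar>j*\<delta>\<bar> \<le> m*\<delta>" using that \<delta>0 by (auto simp: abs_mult intro!: mult_right_mono)
    then show ?thesis using inU m\<delta>\<epsilon> by simp
  qed
  define x where "x j = q (p + j*\<delta>)" for j :: int
  have Fq: "F (q u) = u" if "u \<in> U" for u using qfacts[OF that] by (simp add: q_def)
  have Fx: "F (x j) = p + j*\<delta>" if "j \<in> {-m..m}" for j using Fq[OF gridU[OF that]] by (simp add: x_def)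
  have qmono: "q u \<le> q v" if "u \<in> U" "v \<in> U" "u \<le> v" for u v
  proof (rule ccontr)
    assume "\<not> ?thesis"
    then have "F (q u) > v" using qfacts[OF that(2)] by (simp add: q_def)
    then show False using Fq[OF that(1)] that(3) by simp
  qed
  define B where "B j = (if 0 \<le> j then {q p<..x j} else {x j<..q p})" for j :: int
  have Bm[measurable]: "B j \<in> sets borel" for j by (simp add: B_def)
  have probB: "prob {\<omega>\<in>space M. X i \<omega> \<in> B j} = \<bar>j\<bar>*\<delta>" if "j \<in> {-m..m}" for i j
  proof (cases "0 \<le> j")
    case True
    have "q p \<le> x j" unfolding x_def using qmono[OF pU gridU[OF that]] True \<delta>0 by simp
    then show ?thesis using True prob_int[of "q p" "x j" i] Fx[OF that] Fq[OF pU] by (simp add: B_def)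
  next
    case False
    have "x j \<le> q p" unfolding x_def using qmono[OF gridU[OF that] pU] False \<delta>0 
      by (simp add: mult_nonpos_nonneg)
    then show ?thesis using False prob_int[of "x j" "q p" i] Fx[OF that] Fq[OF pU] by (simp add: B_def)
  qed
  define Sj where "Sj j \<omega> = (\<Sum>i<n. indicator (B j) (X i \<omega>) :: real)" for j \<omega>
  define S0 where "S0 \<omega> = (\<Sum>i<n. indicator {..q p} (X i \<omega>) :: real)" for \<omega>
  define Bad0 where "Bad0 = {\<omega>\<in>space M. real (k n) + a0 \<le> S0 \<omega>} \<union> {\<omega>\<in>space M. S0 \<omega> \<le> real (k n) - a0}"
  define Badj where "Badj j = {\<omega>\<in>space M. real n*(\<bar>j\<bar>*\<delta>) + b \<le> Sj j \<omega>} \<union> {\<omega>\<in>space M. Sj j \<omega> \<le> real n*(\<bar>j\<bar>*\<delta>) - b}" for j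
  define Bad where "Bad = Bad0 \<union> (\<Union>j\<in>{-m..m}. Badj j)"
  have Bad0m: "Bad0 \<in> events" unfolding Bad0_def S0_def by measurable
  have Badjm: "Badj j \<in> events" for j unfolding Badj_def Sj_def by measurable
  have Badm: "Bad \<in> events" unfolding Bad_def using Bad0m Badjm by auto
  have kk: "real (k n) = real n * p" using n0 by (simp add: p_def)
  have expo: "exp (-(t\<^sup>2/(4*V+2*t))) \<le> \<rho> powr (-e)" if "e*L \<le> t\<^sup>2/(4*V+2*t)" for t V e
    by (rule exp_to_powr[OF rho0]) (use that in \<open>simp add: L_def\<close>)
  have e0L: "c * L \<le> a0\<^sup>2/(4*rr + 2*a0)"
  proof -
    have den: "4*rr + 2*a0 \<le> (4+2*\<alpha>)*rr" using th ab rr1 by (simp add: a0_def algebra_simps)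
    have "a0\<^sup>2 = \<alpha>\<^sup>2 * rr * L" using th by (simp add: a0_def L\<Theta> power2_eq_square algebra_simps flip: th(3))
    then have "\<alpha>\<^sup>2 * L / (4+2*\<alpha>) = a0\<^sup>2 / ((4+2*\<alpha>)*rr)"
      using rr1 ab by (simp add: divide_simps)
    also have "\<dots> \<le> a0\<^sup>2/(4*rr + 2*a0)"
    proof (rule divide_left_mono[OF den])
      have p1: "0 < 4*rr + 2*a0" using a00 rr1 by simp
      have p2: "0 < (4+2*\<alpha>)*rr" using ab rr1 by simp
      show "0 < (4+2*\<alpha>)*rr * (4*rr + 2*a0)" using p1 p2 by simp
    qed simp
    finally have "\<alpha>\<^sup>2 * L / (4+2*\<alpha>) \<le> a0\<^sup>2/(4*rr + 2*a0)" .
    moreover have "c * L \<le> \<alpha>\<^sup>2 / (4+2*\<alpha>) * L" using e0 L1 by (intro mult_right_mono) auto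
    ultimately show ?thesis by simp
  qed
  have e1L: "(c+1) * L \<le> b\<^sup>2/(4*((C+1)*rr*T2) + 2*b)"
  proof -
    have den: "4*((C+1)*rr*T2) + 2*b \<le> (4*(C+1)+2*\<beta>)*rr*T2" using th ab rr1 by (simp add: b_def algebra_simps)
    have "b\<^sup>2 = \<beta>\<^sup>2 * L * (rr*T2)" using th by (simp add: b_def L\<Theta> power2_eq_square algebra_simps flip: th(4))
    then have "\<beta>\<^sup>2 * L / (4*(C+1)+2*\<beta>) = b\<^sup>2 / ((4*(C+1)+2*\<beta>)*rr*T2)"
      using rr1 th ab C by (simp add: divide_simps)
    also have "\<dots> \<le> b\<^sup>2/(4*((C+1)*rr*T2) + 2*b)"
    proof (rule divide_left_mono[OF den])
      have T2p: "T2 > 0" by (rule th(8))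
      have p1: "0 < 4*((C+1)*rr*T2) + 2*b" using b0 C rr1 T2p by (simp add: add_pos_pos)
      have p2: "0 < (4*(C+1)+2*\<beta>)*rr*T2" using ab C rr1 T2p by simp
      show "0 < (4*(C+1)+2*\<beta>)*rr*T2 * (4*((C+1)*rr*T2) + 2*b)" using p1 p2 by simp
    qed simp
    finally have "\<beta>\<^sup>2 * L / (4*(C+1)+2*\<beta>) \<le> b\<^sup>2/(4*((C+1)*rr*T2) + 2*b)" .
    moreover have "(c+1) * L \<le> \<beta>\<^sup>2 / (4*(C+1)+2*\<beta>) * L" using e1 L1 by (intro mult_right_mono) auto
    ultimately show ?thesis by simp
  qed
  have P0: "prob Bad0 \<le> 2 * \<rho> powr (-c)"
  proof (cases "k n \<le> n - k n")
    case True
    then have rrk: "rr = real (k n)" by (simp add: rr_def)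
    have q: "prob {\<omega>\<in>space M. X i \<omega> \<in> {..q p}} = p" for i using prob_le Fq[OF pU] by simp
    have V: "real n * p \<le> rr" using rrk kk by simp
    have t1: "prob {\<omega>\<in>space M. real (k n) + a0 \<le> S0 \<omega>} \<le> \<rho> powr (-c)"
      using tail(1)[OF _ q a00 V] expo[OF e0L] kk by (simp add: S0_def)
    have t2: "prob {\<omega>\<in>space M. S0 \<omega> \<le> real (k n) - a0} \<le> \<rho> powr (-c)"
      using tail(2)[OF _ q a00 V] expo[OF e0L] kk by (simp add: S0_def)
    have "prob Bad0 \<le> prob {\<omega>\<in>space M. real (k n) + a0 \<le> S0 \<omega>} + prob {\<omega>\<in>space M. S0 \<omega> \<le> real (k n) - a0}"
      unfolding Bad0_def by (rule measure_Un_le) (unfold S0_def; measurable)+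
    then show ?thesis using t1 t2 by simp
  next
    case False
    then have rrk: "rr = real n - real (k n)" using kn by (simp add: rr_def of_nat_diff)
    define S1 where "S1 \<omega> = (\<Sum>i<n. indicator {q p<..} (X i \<omega>) :: real)" for \<omega>
    have S01: "S0 \<omega> + S1 \<omega> = real n" for \<omega>
    proof -
      have "S0 \<omega> + S1 \<omega> = (\<Sum>i<n. indicator {..q p} (X i \<omega>) + indicator {q p<..} (X i \<omega>) :: real)"
        by (simp add: S0_def S1_def sum.distrib)
      also have "\<dots> = (\<Sum>i<n. 1)" by (rule sum.cong) (auto simp: indicator_def)
      finally show ?thesis by simp
    qed
    have q: "prob {\<omega>\<in>space M. X i \<omega> \<in> {q p<..}} = 1 - p" for i using prob_gt Fq[OF pU] by simp
    have V: "real n * (1 - p) \<le> rr" using rrk kk by (simp add: algebra_simps)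
    have t1: "prob {\<omega>\<in>space M. real n * (1-p) + a0 \<le> S1 \<omega>} \<le> \<rho> powr (-c)"
      using tail(1)[OF _ q a00 V] expo[OF e0L] by (simp add: S1_def)
    have t2: "prob {\<omega>\<in>space M. S1 \<omega> \<le> real n * (1-p) - a0} \<le> \<rho> powr (-c)"
      using tail(2)[OF _ q a00 V] expo[OF e0L] by (simp add: S1_def)
    have eq1: "{\<omega>\<in>space M. real (k n) + a0 \<le> S0 \<omega>} = {\<omega>\<in>space M. S1 \<omega> \<le> real n * (1-p) - a0}"
      using S01 kk by (auto simp: algebra_simps) (smt (verit, best) S01)+
    have eq2: "{\<omega>\<in>space M. S0 \<omega> \<le> real (k n) - a0} = {\<omega>\<in>space M. real n * (1-p) + a0 \<le> S1 \<omega>}"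
      using S01 kk by (auto simp: algebra_simps) (smt (verit, best) S01)+
    have "prob Bad0 \<le> prob {\<omega>\<in>space M. real (k n) + a0 \<le> S0 \<omega>} + prob {\<omega>\<in>space M. S0 \<omega> \<le> real (k n) - a0}"
      unfolding Bad0_def by (rule measure_Un_le) (unfold S0_def; measurable)+
    then show ?thesis using t1 t2 eq1 eq2 by simp
  qed
  have Pj: "prob (Badj j) \<le> 2 * \<rho> powr (-(c+1))" if j: "j \<in> {-m..m}" for j
  proof -
    have q: "prob {\<omega>\<in>space M. X i \<omega> \<in> B j} = \<bar>real_of_int j\<bar>*\<delta>" for i using probB[OF j] by simp
    have V: "real n * (\<bar>real_of_int j\<bar>*\<delta>) \<le> (C+1)*rr*T2"
    proof -
      have "real n * (\<bar>real_of_int j\<bar>*\<delta>) \<le> real n * (m*\<delta>)" using j \<delta>0 n0 by (intro mult_left_mono mult_right_mono) auto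
      then show ?thesis using m\<delta>V by simp
    qed
    have t1: "prob {\<omega>\<in>space M. real n*(\<bar>real_of_int j\<bar>*\<delta>) + b \<le> Sj j \<omega>} \<le> \<rho> powr (-(c+1))"
      using tail(1)[OF _ q b0 V] expo[OF e1L] by (simp add: Sj_def)
    have t2: "prob {\<omega>\<in>space M. Sj j \<omega> \<le> real n*(\<bar>real_of_int j\<bar>*\<delta>) - b} \<le> \<rho> powr (-(c+1))"
      using tail(2)[OF _ q b0 V] expo[OF e1L] by (simp add: Sj_def)
    have "prob (Badj j) \<le> prob {\<omega>\<in>space M. real n*(\<bar>real_of_int j\<bar>*\<delta>) + b \<le> Sj j \<omega>} + prob {\<omega>\<in>space M. Sj j \<omega> \<le> real n*(\<bar>real_of_int j\<bar>*\<delta>) - b}"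
      unfolding Badj_def by (rule measure_Un_le) (unfold Sj_def; measurable)+
    then show ?thesis using t1 t2 by simp
  qed
  have PBad: "prob Bad \<le> (2 + 2*(2*C+3)) * \<rho> powr (-c)"
  proof -
    have card: "real (card {-m..m}) \<le> (2*C+3) * \<rho>"
    proof -
      have "real (card {-m..m}) = 2*m + 1" using m0 by simp
      also have "\<dots> \<le> 2*(C/T1 + 1) + 1" using m1 by simp
      also have "\<dots> \<le> (2*C+3)/T1" using th C by (simp add: field_simps)
      also have "\<dots> \<le> (2*C+3)/\<Theta>"
      proof -
        have "\<Theta> \<le> T1" using th by (metis mult_left_le_one_le less_imp_le th(5) th(8) th(7) mult.commute th(9) mult_le_cancel_right1 order_trans)
        then show ?thesis using C \<Theta> by (intro divide_left_mono) auto
      qed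
      also have "\<dots> = (2*C+3) * (rr/L)" using \<Theta> rr1 L1 by (simp add: \<Theta>_def)
      also have "\<dots> \<le> (2*C+3) * \<rho>"
      proof -
        have "rr/L \<le> rr" using L1 rr1 by (simp add: divide_le_eq mult_le_cancel_left1)
        then show ?thesis using rho C by (intro mult_left_mono) auto
      qed
      finally show ?thesis .
    qed
    have "prob Bad \<le> prob Bad0 + prob (\<Union>j\<in>{-m..m}. Badj j)"
      unfolding Bad_def by (rule measure_Un_le) (use Bad0m Badjm in auto)
    also have "prob (\<Union>j\<in>{-m..m}. Badj j) \<le> (\<Sum>j\<in>{-m..m}. prob (Badj j))"
      by (rule finite_measure_subadditive_finite) (use Badjm in auto)
    also have "\<dots> \<le> (\<Sum>j\<in>{-m..m}. 2 * \<rho> powr (-(c+1)))" by (rule sum_mono) (rule Pj)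
    also have "\<dots> = real (card {-m..m}) * (2 * \<rho> powr (-(c+1)))" by simp
    also have "\<dots> \<le> ((2*C+3) * \<rho>) * (2 * \<rho> powr (-(c+1)))" using card by (intro mult_right_mono) auto
    also have "((2*C+3) * \<rho>) * (2 * \<rho> powr (-(c+1))) = 2*(2*C+3) * \<rho> powr (-c)"
      using rho0 by (simp add: powr_add[symmetric] powr_diff powr_minus field_simps)
    finally show ?thesis using P0 by (simp add: algebra_simps)
  qed
  define hq where "hq = \<bar>g (q p)\<bar> / f (q p)"
  have fqp: "f (q p) > 0" using derF[OF pU] by (simp add: q_def)
  have hq0: "hq \<ge> 0" using fqp by (simp add: hq_def)
  define Z where "Z = rr*T3/real n"
  define D where "D = 1+\<beta>+\<bar>K\<bar>*(C+1)"
  have D0: "D \<ge> 0" using ab C by (simp add: D_def)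
  have Zle: "Z \<le> 2 * ((p * (1 - p)) powr (1/4) * (L / real n) powr (3/4))"
    unfolding Z_def
  proof (rule final_ineq[where \<Theta>=\<Theta>])
    show "rr / real n / 2 \<le> p * (1 - p)" unfolding rr_def p_def by (rule pq_bound) (use kn in auto)
  qed (use rr1 n0 L\<Theta> \<Theta> in \<open>auto simp: T3_def\<close>)
  have sdef: "sqrt (rr * L / (real n)\<^sup>2) = rr*T2/real n"
  proof -
    have "rr * L / (real n)\<^sup>2 = (rr*T2/real n)\<^sup>2"
      using th(3) by (simp add: L\<Theta> power2_eq_square field_simps flip: th(3))
    then show ?thesis using rr1 th n0 by simp
  qed
  have Psi_pt: "\<bar>g (q (p + t * (rr*T2/real n))) / f (q (p + t * (rr*T2/real n))) - g (q p) / f (q p)\<bar> \<le> K * (T1 * hq)"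
    if "t \<in> {-(C+1)..C+1}" for t
  proof -
    have "ereal \<bar>g (q (p + t * (rr*T2/real n))) / f (q (p + t * (rr*T2/real n))) - g (q p) / f (q p)\<bar> \<le> ereal (K * (T1 * hq))"
      using PsiB that unfolding Psi_def SUP_le_iff sdef by (simp add: q_def hq_def T1_def \<Theta>_def)
    then show ?thesis by simp
  qed
  have incl: "{\<omega> \<in> space M.
            \<bar>G (quantile (emp_df X n \<omega>) p) - G (quantile F p)
             + (emp_df X n \<omega> (quantile F p) - F (quantile F p)) * (g (quantile F p) / f (quantile F p))\<bar>
            > 2*(1+\<beta>+\<bar>K\<bar>*(C+1)) * (p * (1 - p)) powr (1/4) * (L / real n) powr (3/4)
                * (\<bar>g (quantile F p)\<bar> / f (quantile F p))} \<subseteq> Bad"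
  proof (rule subsetI)
    fix \<omega> assume om: "\<omega> \<in> {\<omega> \<in> space M.
            \<bar>G (quantile (emp_df X n \<omega>) p) - G (quantile F p)
             + (emp_df X n \<omega> (quantile F p) - F (quantile F p)) * (g (quantile F p) / f (quantile F p))\<bar>
            > 2*(1+\<beta>+\<bar>K\<bar>*(C+1)) * (p * (1 - p)) powr (1/4) * (L / real n) powr (3/4)
                * (\<bar>g (quantile F p)\<bar> / f (quantile F p))}"
    then have sp: "\<omega> \<in> space M" by simp
    show "\<omega> \<in> Bad"
    proof (rule ccontr)
      assume nb: "\<omega> \<notin> Bad"
      define Nr where "Nr y = (\<Sum>i<n. indicator {..y} (X i \<omega>) :: real)" for y
      define N0 where "N0 = S0 \<omega>"
      have N0: "N0 = Nr (q p)" by (simp add: N0_def S0_def Nr_def)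
      have monoN: "mono Nr"
        unfolding Nr_def by (rule monoI, rule sum_mono) (auto simp: indicator_def)
      have good0: "\<bar>N0 - real (k n)\<bar> < a0" using nb sp by (auto simp: Bad_def Bad0_def N0_def)
      have ind_diff: "indicator {a<..b'} y = indicator {..b'} y - (indicator {..a} y :: real)" if "a \<le> b'" for a b' y :: real
        using that by (auto simp: indicator_def)
      have good: "\<bar>Nr (x j) - N0 - real n * j * \<delta>\<bar> < b" if j: "j \<in> {-m..m}" for j
      proof -
        have nbj: "\<omega> \<notin> Badj j" using nb j by (auto simp: Bad_def)
        have bnd: "\<bar>Sj j \<omega> - real n*(\<bar>real_of_int j\<bar>*\<delta>)\<bar> < b" using nbj sp by (auto simp: Badj_def)
        show ?thesis
        proof (cases "0 \<le> j")
          case True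
          have le: "q p \<le> x j" unfolding x_def using qmono[OF pU gridU[OF j]] True \<delta>0 by simp
          have "Sj j \<omega> = Nr (x j) - N0" unfolding Sj_def B_def N0 Nr_def using True le
            by (simp add: ind_diff sum_subtractf)
          then show ?thesis using bnd True by simp
        next
          case False
          have le: "x j \<le> q p" unfolding x_def using qmono[OF gridU[OF j] pU] False \<delta>0
            by (simp add: mult_nonpos_nonneg)
          have "Sj j \<omega> = N0 - Nr (x j)" unfolding Sj_def B_def N0 Nr_def using False le
            by (simp add: ind_diff sum_subtractf)
          then show ?thesis using bnd False by (simp add: abs_minus_commute algebra_simps)
        qed
      qed
      define \<xi> where "\<xi> = quantile (emp_df X n \<omega>) p"
      have E1: "Nr y < real (k n)" if "y < \<xi>" for y
        using emp_quantile(1)[of "k n" n y X \<omega>] kn that by (simp add: \<xi>_def Nr_def p_def)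
      have E2: "real (k n) \<le> Nr \<xi>"
        using emp_quantile(2)[of "k n" n X \<omega>] kn by (simp add: \<xi>_def Nr_def p_def)
      have xstrict: "F y > F (x j)" if "j \<in> {-m..m}" "y > x j" for j y
        using qfacts[OF gridU[OF that(1)]] that(2) Fx[OF that(1)] by (simp add: x_def q_def)
      note bah = bahadur_det[where F=F and Nr=Nr and x=x and m=m and p=p and \<delta>=\<delta> and kk="real (k n)"
          and Nz=N0 and b=b and az=a0 and nn="real n" and \<xi>=\<xi>, OF Fmono monoN Fx xstrict E1 E2 good good0 big \<delta>0 n0 kk m0]
      define V where "V = F \<xi>"
      have Vlo: "\<bar>V - p\<bar> \<le> \<epsilon>" using bah(1,2) m\<delta>\<epsilon> by (simp add: V_def abs_le_iff)
      have Vbah: "\<bar>real n*(V - p) + N0 - real (k n)\<bar> < real n*\<delta> + b" using bah(3) by (simp add: V_def)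
      have mv: "\<exists>w. min p (F \<xi>) \<le> w \<and> w \<le> max p (F \<xi>) \<and>
          G \<xi> - G (quantile F p) = (F \<xi> - p) * (g (quantile F w) / f (quantile F w))"
      proof (rule mvt_det[where lo="p - \<epsilon>" and hi="p + \<epsilon>", OF Fmono])
        fix u assume u: "u \<in> {p - \<epsilon>..p + \<epsilon>}"
        then have uU: "u \<in> U" using inU by (auto simp: abs_le_iff)
        show "F (quantile F u) = u \<and> (\<forall>x<quantile F u. F x < u) \<and> (\<forall>x>quantile F u. F x > u)" by (rule qfacts[OF uU])
        show "DERIV F (quantile F u) :> f (quantile F u) \<and> f (quantile F u) > 0 \<and> DERIV G (quantile F u) :> g (quantile F u)"
          using derF[OF uU] derG[OF uU] by simp
      qed (use \<epsilon>0 Vlo in \<open>auto simp: V_def abs_le_iff\<close>)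
      then obtain w where w: "min p V \<le> w" "w \<le> max p V"
        and Gw: "G \<xi> - G (q p) = (V - p) * (g (q w) / f (q w))" by (auto simp: V_def q_def)
      define hp where "hp = g (q p) / f (q p)"
      define hw where "hw = g (q w) / f (q w)"
      have hpabs: "\<bar>hp\<bar> = hq" using fqp by (simp add: hp_def hq_def abs_divide)
      define sv where "sv = rr*T2/real n"
      have s0: "sv > 0" using rr1 th n0 by (simp add: sv_def)
      have eps_s: "\<epsilon> = (C+1) * sv" by (simp add: \<epsilon>_def sv_def)
      have wp: "\<bar>w - p\<bar> \<le> \<epsilon>" using w Vlo by (auto simp: abs_le_iff)
      define t where "t = (w - p)/sv"
      have t: "t \<in> {-(C+1)..C+1}" using wp s0 eps_s by (auto simp: t_def abs_le_iff field_simps)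
      have wt: "p + t * sv = w" using s0 by (simp add: t_def)
      have hdiff: "\<bar>hw - hp\<bar> \<le> \<bar>K\<bar> * (T1 * hq)"
      proof -
        have "\<bar>hw - hp\<bar> \<le> K * (T1 * hq)" using Psi_pt[OF t] wt by (simp add: hw_def hp_def sv_def)
        also have "\<dots> \<le> \<bar>K\<bar> * (T1 * hq)" using th hq0 by (intro mult_right_mono) auto
        finally show ?thesis .
      qed
      have emp: "emp_df X n \<omega> (q p) = N0 / real n"
        by (simp only: emp_df_def card_le_sum_ind N0 Nr_def)
      have R: "G \<xi> - G (q p) + (emp_df X n \<omega> (q p) - F (q p)) * hp
           = hp * ((real n*(V - p) + N0 - real (k n)) / real n) + (hw - hp) * (V - p)"
        using Gw emp Fq[OF pU] kk n0 by (simp add: hw_def field_simps)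
      have R1: "\<bar>hp * ((real n*(V - p) + N0 - real (k n)) / real n)\<bar> \<le> hq * ((1+\<beta>)*Z)"
      proof -
        have "\<bar>(real n*(V - p) + N0 - real (k n)) / real n\<bar> \<le> (real n*\<delta> + b)/real n"
          using Vbah n0 by (simp add: abs_divide divide_right_mono)
        also have "\<dots> = (1+\<beta>)*Z" using n0 by (simp add: \<delta>_def b_def Z_def field_simps)
        finally have "\<bar>(real n*(V - p) + N0 - real (k n)) / real n\<bar> \<le> (1+\<beta>)*Z" .
        then have "hq * \<bar>(real n*(V - p) + N0 - real (k n)) / real n\<bar> \<le> hq * ((1+\<beta>)*Z)"
          using hq0 by (rule mult_left_mono)
        then show ?thesis using hpabs by (simp only: abs_mult)
      qed
      have R2: "\<bar>(hw - hp) * (V - p)\<bar> \<le> \<bar>K\<bar>*(C+1)*hq*Z"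
      proof -
        have "\<bar>(hw - hp) * (V - p)\<bar> \<le> (\<bar>K\<bar> * (T1 * hq)) * \<epsilon>"
          unfolding abs_mult using hdiff Vlo by (intro mult_mono) auto
        also have "\<dots> = \<bar>K\<bar>*(C+1)*hq*Z" using th by (simp add: \<epsilon>_def Z_def field_simps flip: th(2))
        finally show ?thesis .
      qed
      have "\<bar>G \<xi> - G (q p) + (emp_df X n \<omega> (q p) - F (q p)) * hp\<bar>
          \<le> \<bar>hp * ((real n*(V - p) + N0 - real (k n)) / real n)\<bar> + \<bar>(hw - hp) * (V - p)\<bar>"
        unfolding R by (rule abs_triangle_ineq)
      also have "\<dots> \<le> hq * ((1+\<beta>)*Z) + \<bar>K\<bar>*(C+1)*hq*Z" using R1 R2 by (rule add_mono)
      also have "\<dots> = D * hq * Z" by (simp add: D_def algebra_simps)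
      also have "\<dots> \<le> D * hq * (2 * ((p * (1 - p)) powr (1/4) * (L / real n) powr (3/4)))"
        using Zle D0 hq0 by (intro mult_left_mono) auto
      finally have "\<bar>G \<xi> - G (q p) + (emp_df X n \<omega> (q p) - F (q p)) * hp\<bar>
          \<le> 2*(1+\<beta>+\<bar>K\<bar>*(C+1)) * (p * (1 - p)) powr (1/4) * (L / real n) powr (3/4) * hq"
        by (simp add: D_def algebra_simps)
      then show False using om by (simp add: \<xi>_def q_def hp_def hq_def)
    qed
  qed
  have "measure M {\<omega> \<in> space M.
            \<bar>G (quantile (emp_df X n \<omega>) p) - G (quantile F p)
             + (emp_df X n \<omega> (quantile F p) - F (quantile F p)) * (g (quantile F p) / f (quantile F p))\<bar>
            > 2*(1+\<beta>+\<bar>K\<bar>*(C+1)) * (p * (1 - p)) powr (1/4) * (L / real n) powr (3/4)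
                * (\<bar>g (quantile F p)\<bar> / f (quantile F p))} \<le> prob Bad"
    by (rule finite_measure_mono[OF incl Badm])
  then show ?thesis using PBad by simp
qed

end


context setting begin

lemma generic:
  fixes \<rho> :: "nat \<Rightarrow> real"
  assumes r_inf: "filterlim (\<lambda>n. min (k n) (n - k n)) at_top sequentially"
    and rho_ge: "eventually (\<lambda>n. real (min (k n) (n - k n)) \<le> \<rho> n) sequentially"
    and Lr0: "(\<lambda>n. ln (\<rho> n) / real (min (k n) (n - k n))) \<longlonglongrightarrow> 0"
    and cond: "\<And>C. C > 0 \<Longrightarrow> \<exists>K. \<forall>\<^sub>F n in sequentially.
        Psi F (\<lambda>x. g x / f x) (real (k n) / real n)
            (sqrt (real (min (k n) (n - k n)) * ln (\<rho> n) / (real n)\<^sup>2)) C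
        \<le> ereal (K * ((ln (\<rho> n) / real (min (k n) (n - k n))) powr (1/4)
               * (\<bar>g (quantile F (real (k n) / real n))\<bar> / f (quantile F (real (k n) / real n)))))"
  shows "\<forall>c>0. \<exists>A>0.
        (\<lambda>n. measure M {\<omega> \<in> space M.
            \<bar>G (quantile (emp_df X n \<omega>) (real (k n) / real n)) - G (quantile F (real (k n) / real n))
             + (emp_df X n \<omega> (quantile F (real (k n) / real n)) - F (quantile F (real (k n) / real n)))
               * (g (quantile F (real (k n) / real n)) / f (quantile F (real (k n) / real n)))\<bar>
            > A * ((real (k n) / real n) * (1 - real (k n) / real n)) powr (1/4)
                * (ln (\<rho> n) / real n) powr (3/4)
                * (\<bar>g (quantile F (real (k n) / real n))\<bar> / f (quantile F (real (k n) / real n)))})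
        \<in> O(\<lambda>n. \<rho> n powr (-c))"
proof (intro allI impI)
  fix c :: real assume c: "c > 0"
  define \<alpha> where "\<alpha> = 4*c + 4"
  have \<alpha>0: "\<alpha> > 0" using c by (simp add: \<alpha>_def)
  have e0: "c \<le> \<alpha>\<^sup>2/(4+2*\<alpha>)"
  proof -
    have "c*(4+2*\<alpha>) \<le> \<alpha>*\<alpha>"
    proof -
      have "c*(4+2*\<alpha>) \<le> \<alpha>*(4*c+4)" using c \<alpha>0 by (simp add: \<alpha>_def algebra_simps)
      then show ?thesis by (simp add: \<alpha>_def)
    qed
    then show ?thesis using \<alpha>0 by (simp add: le_divide_eq power2_eq_square)
  qed
  define a' where "a' = (c+1)*(4*\<alpha>+8)"
  define b' where "b' = 6*(c+1)"
  define \<beta> where "\<beta> = a' + b' + 1"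
  have a'0: "a' \<ge> 0" "b' \<ge> 0" using c \<alpha>0 by (auto simp: a'_def b'_def)
  have \<beta>0: "\<beta> > 0" using a'0 by (simp add: \<beta>_def)
  define C where "C = \<alpha> + \<beta> + 1"
  have C0: "C + 1 > 0" using \<alpha>0 \<beta>0 by (simp add: C_def)
  have e1: "c + 1 \<le> \<beta>\<^sup>2/(4*(C+1)+2*\<beta>)"
  proof -
    have eq: "(c+1)*(4*(C+1)+2*\<beta>) = a' + b'*\<beta>" by (simp add: C_def a'_def b'_def algebra_simps)
    have "a' + b'*\<beta> \<le> \<beta>*\<beta>"
    proof -
      have "\<beta>*\<beta> = \<beta>*b' + \<beta>*(a'+1)" by (simp add: \<beta>_def algebra_simps)
      moreover have "a' \<le> \<beta>*(a'+1)" using a'0 \<beta>0 by (simp add: \<beta>_def algebra_simps)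
      ultimately show ?thesis by (simp add: algebra_simps)
    qed
    then have "(c+1)*(4*(C+1)+2*\<beta>) \<le> \<beta>\<^sup>2" using eq by (simp add: power2_eq_square)
    moreover have "4*(C+1)+2*\<beta> > 0" using C0 \<beta>0 by simp
    ultimately show ?thesis by (simp add: le_divide_eq)
  qed
  obtain K where K: "\<forall>\<^sub>F n in sequentially.
        Psi F (\<lambda>x. g x / f x) (real (k n) / real n)
            (sqrt (real (min (k n) (n - k n)) * ln (\<rho> n) / (real n)\<^sup>2)) (C+1)
        \<le> ereal (K * ((ln (\<rho> n) / real (min (k n) (n - k n))) powr (1/4)
               * (\<bar>g (quantile F (real (k n) / real n))\<bar> / f (quantile F (real (k n) / real n)))))"
    using cond[OF C0] by blast
  have p01: "0 \<le> real (k n) / real n \<and> real (k n) / real n \<le> 1" for n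
    using k_le[of n] by (cases "n = 0") (auto simp: divide_le_eq)
  obtain lo hi \<eta> where \<eta>: "\<eta> > 0" and loU: "\<forall>u. 0 < u \<and> u < 1 \<and> lo - \<eta> \<le> u \<and> u \<le> hi + \<eta> \<longrightarrow> u \<in> U"
    and evp: "eventually (\<lambda>n. lo - \<eta>/2 < real (k n) / real n \<and> real (k n) / real n < hi + \<eta>/2) sequentially"
    using A1_interval[OF A1 p01] by blast
  define \<theta>0 where "\<theta>0 = min 1 ((min (1/2) (\<eta>/2) / (C+1))\<^sup>2)"
  have \<theta>0: "\<theta>0 > 0" using \<eta> C0 by (simp add: \<theta>0_def)
  have ev1: "eventually (\<lambda>n. exp 1 \<le> real (min (k n) (n - k n))) sequentially"
    using filterlim_compose[OF filterlim_real_sequentially r_inf] by (simp add: filterlim_at_top)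
  have ev3: "eventually (\<lambda>n. ln (\<rho> n) / real (min (k n) (n - k n)) < \<theta>0) sequentially"
    using order_tendstoD(2)[OF Lr0 \<theta>0] .
  define A where "A = 2*(1+\<beta>+\<bar>K\<bar>*(C+1))"
  have A0: "A > 0" using \<beta>0 C0 by (simp add: A_def add_pos_nonneg)
  have main: "eventually (\<lambda>n. measure M {\<omega> \<in> space M.
            \<bar>G (quantile (emp_df X n \<omega>) (real (k n) / real n)) - G (quantile F (real (k n) / real n))
             + (emp_df X n \<omega> (quantile F (real (k n) / real n)) - F (quantile F (real (k n) / real n)))
               * (g (quantile F (real (k n) / real n)) / f (quantile F (real (k n) / real n)))\<bar>
            > A * ((real (k n) / real n) * (1 - real (k n) / real n)) powr (1/4)
                * (ln (\<rho> n) / real n) powr (3/4)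
                * (\<bar>g (quantile F (real (k n) / real n))\<bar> / f (quantile F (real (k n) / real n)))}
          \<le> (2 + 2*(2*C+3)) * \<rho> n powr (-c)) sequentially"
    using ev1 ev3 rho_ge evp K
  proof eventually_elim
    case (elim n)
    define rr where "rr = real (min (k n) (n - k n))"
    define L where "L = ln (\<rho> n)"
    define p where "p = real (k n) / real n"
    have rr1: "rr \<ge> exp 1" using elim(1) by (simp add: rr_def)
    have rr0: "rr > 0" using rr1 by (smt (verit) exp_gt_zero)
    have "rr \<ge> 1" using rr1 by (smt (verit) one_le_exp_iff)
    then have kn: "1 \<le> k n" "k n < n" unfolding rr_def by linarith+
    have rho: "rr \<le> \<rho> n" using elim(3) by (simp add: rr_def)
    have L1: "1 \<le> L" unfolding L_def using rr1 rho
      by (metis exp_gt_zero ln_exp ln_le_cancel_iff order.strict_trans2 order_trans)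
    have Lr\<theta>: "L / rr < \<theta>0" using elim(2) by (simp add: L_def rr_def)
    have Lr: "L \<le> rr" using Lr\<theta> \<theta>0_def rr0 by (simp add: divide_less_eq) 
    have sq: "(C+1)*(L/rr) powr (1/2) \<le> min (1/2) (\<eta>/2)"
    proof -
      have Lr0': "L/rr \<ge> 0" using L1 rr0 by simp
      have "L/rr \<le> (min (1/2) (\<eta>/2) / (C+1))\<^sup>2" using Lr\<theta> by (simp add: \<theta>0_def)
      then have "sqrt (L/rr) \<le> min (1/2) (\<eta>/2) / (C+1)"
        using \<eta> C0 by (simp add: real_le_lsqrt real_sqrt_le_iff)
      then show ?thesis using C0 Lr0' by (simp add: powr_half_sqrt field_simps)
    qed
    have rrp: "rr / real n \<le> p" "rr / real n \<le> 1 - p" using kn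
      by (auto simp: rr_def p_def divide_right_mono of_nat_diff field_simps)
    have intv: "u \<in> U" if u: "\<bar>u - p\<bar> \<le> (C+1)*rr*(L/rr) powr (1/2)/real n" for u
    proof -
      define e where "e = (C+1)*(L/rr) powr (1/2)"
      have e0': "e \<ge> 0" using C0 by (simp add: e_def)
      have ue: "\<bar>u - p\<bar> \<le> e * (rr/real n)" using u by (simp add: e_def mult.commute mult.left_commute)
      define E where "E = e * (rr/real n)"
      define R where "R = rr/real n"
      have f1: "E \<le> (1/2) * R" unfolding E_def R_def using sq rr0 by (intro mult_right_mono) (auto simp: e_def)
      have f2: "E \<le> \<eta>/2 * 1" unfolding E_def
        using sq rrp p01[of n] e0' rr0 by (intro mult_mono) (auto simp: e_def p_def)
      have f3: "p > 0" "p < 1" using kn by (simp_all add: p_def)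
      have f4: "R \<le> p" "R \<le> 1 - p" using rrp by (simp_all add: R_def)
      have f5: "lo - \<eta>/2 < p" "p < hi + \<eta>/2" using elim(4) by (simp_all add: p_def)
      have f6: "u - p \<le> E" "p - u \<le> E" using ue by (simp_all add: E_def abs_le_iff)
      have "0 < u" "u < 1" "lo - \<eta> \<le> u" "u \<le> hi + \<eta>"
        using f1 f2 f3 f4 f5 f6 by linarith+
      then show ?thesis using loU by blast
    qed
    have PsiB: "Psi F (\<lambda>x. g x / f x) p (sqrt (rr * L / (real n)\<^sup>2)) (C+1)
        \<le> ereal (K * ((L/rr) powr (1/4) * (\<bar>g (quantile F p)\<bar> / f (quantile F p))))"
      using elim(5) by (simp add: rr_def L_def p_def)
    have "measure M {\<omega> \<in> space M.
            \<bar>G (quantile (emp_df X n \<omega>) p) - G (quantile F p)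
             + (emp_df X n \<omega> (quantile F p) - F (quantile F p)) * (g (quantile F p) / f (quantile F p))\<bar>
            > 2*(1+\<beta>+\<bar>K\<bar>*(C+1)) * (p * (1 - p)) powr (1/4) * (L / real n) powr (3/4)
                * (\<bar>g (quantile F p)\<bar> / f (quantile F p))}
         \<le> (2 + 2*(2*C+3)) * \<rho> n powr (-c)"
      using core[of n "\<rho> n" \<alpha> \<beta> c K] kn L1 Lr rho \<alpha>0 \<beta>0 c e0 e1 intv PsiB
      unfolding rr_def[symmetric] L_def[symmetric] p_def[symmetric] C_def[symmetric] by blast
    then show ?case by (simp add: A_def p_def L_def)
  qed
  show "\<exists>A>0.
        (\<lambda>n. measure M {\<omega> \<in> space M.
            \<bar>G (quantile (emp_df X n \<omega>) (real (k n) / real n)) - G (quantile F (real (k n) / real n))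
             + (emp_df X n \<omega> (quantile F (real (k n) / real n)) - F (quantile F (real (k n) / real n)))
               * (g (quantile F (real (k n) / real n)) / f (quantile F (real (k n) / real n)))\<bar>
            > A * ((real (k n) / real n) * (1 - real (k n) / real n)) powr (1/4)
                * (ln (\<rho> n) / real n) powr (3/4)
                * (\<bar>g (quantile F (real (k n) / real n))\<bar> / f (quantile F (real (k n) / real n)))})
        \<in> O(\<lambda>n. \<rho> n powr (-c))"
  proof (intro exI conjI)
    show "A > 0" by (rule A0)
    show "(\<lambda>n. measure M {\<omega> \<in> space M.
            \<bar>G (quantile (emp_df X n \<omega>) (real (k n) / real n)) - G (quantile F (real (k n) / real n))
             + (emp_df X n \<omega> (quantile F (real (k n) / real n)) - F (quantile F (real (k n) / real n)))
               * (g (quantile F (real (k n) / real n)) / f (quantile F (real (k n) / real n)))\<bar>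
            > A * ((real (k n) / real n) * (1 - real (k n) / real n)) powr (1/4)
                * (ln (\<rho> n) / real n) powr (3/4)
                * (\<bar>g (quantile F (real (k n) / real n))\<bar> / f (quantile F (real (k n) / real n)))})
        \<in> O(\<lambda>n. \<rho> n powr (-c))"
      by (rule bigoI[where c="2 + 2*(2*C+3)"]) (use main in \<open>auto elim!: eventually_mono\<close>)
  qed
qed

end


theorem theorem3:
  fixes M :: "'a measure" and X :: "nat \<Rightarrow> 'a \<Rightarrow> real"
    and F f G g :: "real \<Rightarrow> real" and U :: "real set" and k :: "nat \<Rightarrow> nat"
  assumes prob: "prob_space M"
    and indep: "prob_space.indep_vars M (\<lambda>_. borel) X UNIV"
    and df: "\<And>i x. measure M {\<omega> \<in> space M. X i \<omega> \<le> x} = F x"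
    and k_le: "\<And>n. k n \<le> n"
    and r_inf: "filterlim (\<lambda>n. min (k n) (n - k n)) at_top sequentially"
    and A1: "cond_A1 F f U (\<lambda>n. real (k n) / real n)"
    and G_deriv: "\<forall>x \<in> quantile F ` U. (G has_real_derivative g x) (at x)"
    and cond_i: "\<And>C. C > 0 \<Longrightarrow> \<exists>K. \<forall>\<^sub>F n in sequentially.
        Psi F (\<lambda>x. g x / f x) (real (k n) / real n)
            (sqrt (real (min (k n) (n - k n)) * ln (real (min (k n) (n - k n))) / (real n)\<^sup>2)) C
        \<le> ereal (K * ((ln (real (min (k n) (n - k n))) / real (min (k n) (n - k n))) powr (1/4)
               * (\<bar>g (quantile F (real (k n) / real n))\<bar> / f (quantile F (real (k n) / real n)))))"
  shows
    "(\<forall>c>0. \<exists>A>0.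
        (\<lambda>n. measure M {\<omega> \<in> space M.
            \<bar>G (quantile (emp_df X n \<omega>) (real (k n) / real n)) - G (quantile F (real (k n) / real n))
             + (emp_df X n \<omega> (quantile F (real (k n) / real n)) - F (quantile F (real (k n) / real n)))
               * (g (quantile F (real (k n) / real n)) / f (quantile F (real (k n) / real n)))\<bar>
            > A * ((real (k n) / real n) * (1 - real (k n) / real n)) powr (1/4)
                * (ln (real (min (k n) (n - k n))) / real n) powr (3/4)
                * (\<bar>g (quantile F (real (k n) / real n))\<bar> / f (quantile F (real (k n) / real n)))})
        \<in> O(\<lambda>n. real (min (k n) (n - k n)) powr (-c)))
     \<and>
     ((((\<lambda>n. ln (real n) / real (min (k n) (n - k n))) \<longlonglongrightarrow> 0) \<and>
       (\<forall>C>0. \<exists>K. \<forall>\<^sub>F n in sequentially.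
        Psi F (\<lambda>x. g x / f x) (real (k n) / real n)
            (sqrt (real (min (k n) (n - k n)) * ln (real n) / (real n)\<^sup>2)) C
        \<le> ereal (K * ((ln (real n) / real (min (k n) (n - k n))) powr (1/4)
               * (\<bar>g (quantile F (real (k n) / real n))\<bar> / f (quantile F (real (k n) / real n))))))) \<longrightarrow>
      (\<forall>c>0. \<exists>A>0.
        (\<lambda>n. measure M {\<omega> \<in> space M.
            \<bar>G (quantile (emp_df X n \<omega>) (real (k n) / real n)) - G (quantile F (real (k n) / real n))
             + (emp_df X n \<omega> (quantile F (real (k n) / real n)) - F (quantile F (real (k n) / real n)))
               * (g (quantile F (real (k n) / real n)) / f (quantile F (real (k n) / real n)))\<bar>
            > A * ((real (k n) / real n) * (1 - real (k n) / real n)) powr (1/4)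
                * (ln (real n) / real n) powr (3/4)
                * (\<bar>g (quantile F (real (k n) / real n))\<bar> / f (quantile F (real (k n) / real n)))})
        \<in> O(\<lambda>n. real n powr (-c))))"
proof -
  interpret setting M X F f G g U k
    using prob indep df k_le A1 G_deriv by (simp add: setting_def setting_axioms_def)
  have L1: "(\<lambda>n. ln (real (min (k n) (n - k n))) / real (min (k n) (n - k n))) \<longlonglongrightarrow> 0"
    using filterlim_compose[OF ln_x_over_x_tendsto_0 filterlim_compose[OF filterlim_real_sequentially r_inf]]
    by simp
  have ev1: "eventually (\<lambda>n. real (min (k n) (n - k n)) \<le> real (min (k n) (n - k n))) sequentially" by simp
  have ev2: "eventually (\<lambda>n. real (min (k n) (n - k n)) \<le> real n) sequentially"
    by (rule always_eventually) (simp add: min_le_iff_disj)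
  show ?thesis
    apply (rule conjI)
     apply (rule generic[where \<rho>="\<lambda>n. real (min (k n) (n - k n))", OF r_inf ev1 L1])
     apply (erule cond_i)
    apply (rule impI)
    apply (elim conjE)
    apply (rule generic[where \<rho>="\<lambda>n. real n", OF r_inf ev2])
     apply assumption
    apply blast
    done
qed

end
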